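(* Let $\mu>0$, $1<\alpha\le e^2$, $f(x)=xe^{-x}$, and let $\beta\in L^\infty_+(0,+\infty)$ satisfy $\int_0^{\infty}\beta(a)e^{-\mu a}\,da=1$. Consider $$\partial_tu+\partial_au=-\mu u\ (t>0,a>0),\qquad u(t,0)=\alpha f\Big(\int_0^\infty\beta(a)u(t,a)\,da\Big),\qquad u(0,\cdot)=u_0\in L^1_+(0,\infty).$$ Then the positive equilibrium $\bar u(a)=\ln(\alpha)e^{-\mu a}$ is globally asymptotically stable on $\widehat M_0=\{u_0\in L^1_+(0,\infty):\int_0^{a^\star}u_0(a)\,da>0\}$, where $a^\star=\sup\{a>0:\int_a^\infty\beta(\sigma)e^{-\mu\sigma}\,d\sigma>0\}$; in particular the compact global attractor of the semiflow in $\widehat M_0$ is $\{\bar u\}$, so that every solution with $u_0\in\widehat M_0$ converges to $\bar u$ in $L^1(0,\infty)$ as $t\to\infty$.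
   Context: Solutions are understood in the integrated sense: $u(t,a)=e^{-\mu t}u_0(a-t)$ for $a\ge t$ and $u(t,a)=e^{-\mu a}b(t-a)$ for $a\le t$, where $b$ is the unique continuous solution of $b(t)=\alpha f\big(\int_t^\infty\beta(a)e^{-\mu t}u_0(a-t)\,da+\int_0^t\beta(a)e^{-\mu a}b(t-a)\,da\big)$, $t\ge0$. *)

theory Defs
  imports "HOL-Analysis.Analysis"
begin

definition ricker :: "real \<Rightarrow> real" where
  "ricker x = x * exp (- x)"

text \<open>Integrated (mild) solution built from initial datum u0 and boundary flux b.\<close>
definition age_sol :: "real \<Rightarrow> (real \<Rightarrow> real) \<Rightarrow> (real \<Rightarrow> real) \<Rightarrow> real \<Rightarrow> real \<Rightarrow> real" where
  "age_sol \<mu> u0 b t a = (if t \<le> a then exp (- \<mu> * t) * u0 (a - t) else exp (- \<mu> * a) * b (t - a))"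

definition renewal_sol :: "real \<Rightarrow> real \<Rightarrow> (real \<Rightarrow> real) \<Rightarrow> (real \<Rightarrow> real) \<Rightarrow> (real \<Rightarrow> real) \<Rightarrow> bool" where
  "renewal_sol \<mu> \<alpha> \<beta> u0 b \<longleftrightarrow> continuous_on {0..} b \<and>
     (\<forall>t\<ge>0. b t = \<alpha> * ricker
        ((LINT a:{t<..}|lborel. \<beta> a * exp (- \<mu> * t) * u0 (a - t))
         + (LINT a:{0..t}|lborel. \<beta> a * exp (- \<mu> * a) * b (t - a))))"

definition L1_plus :: "(real \<Rightarrow> real) \<Rightarrow> bool" where
  "L1_plus u0 \<longleftrightarrow> set_integrable lborel {0<..} u0 \<and> (AE a in lborel. 0 < a \<longrightarrow> 0 \<le> u0 a)"

definition a_star :: "real \<Rightarrow> (real \<Rightarrow> real) \<Rightarrow> ereal" where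
  "a_star \<mu> \<beta> = (SUP a \<in> {a. 0 < a \<and> (LINT s:{a<..}|lborel. \<beta> s * exp (- \<mu> * s)) > 0}. ereal a)"

definition M0_hat :: "real \<Rightarrow> (real \<Rightarrow> real) \<Rightarrow> (real \<Rightarrow> real) set" where
  "M0_hat \<mu> \<beta> = {u0. L1_plus u0 \<and>
      (LINT a:{a. 0 < a \<and> ereal a < a_star \<mu> \<beta>}|lborel. u0 a) > 0}"

definition L1_dist :: "(real \<Rightarrow> real) \<Rightarrow> (real \<Rightarrow> real) \<Rightarrow> real" where
  "L1_dist u v = (LINT a:{0<..}|lborel. \<bar>u a - v a\<bar>)"

end

theory Submission
  imports Defs
begin

lemma ricker_le: "ricker x \<le> exp (-1)"
proof -
  have "x \<le> exp (x - 1)" using exp_ge_add_one_self[of "x-1"] by simp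
  hence "x * exp (-x) \<le> exp (x-1) * exp (-x)" by (simp add: mult_right_mono)
  also have "\<dots> = exp (-1)" by (simp add: exp_add[symmetric])
  finally show ?thesis by (simp add: ricker_def)
qed

lemma ricker_pos: "0 < x \<Longrightarrow> 0 < ricker x"
  by (simp add: ricker_def)

lemma ricker_nonneg: "0 \<le> x \<Longrightarrow> 0 \<le> ricker x"
  by (simp add: ricker_def)

lemma ricker_cont: "continuous_on S ricker"
  unfolding ricker_def by (intro continuous_intros)

lemma phi1_pos:
  fixes h :: real assumes "0 < h" shows "1 - exp h + h * exp h > 0"
proof -
  have "(\<lambda>x. 1 - exp x + x * exp x) 0 < (\<lambda>x. 1 - exp x + x * exp x) h"
  proof (rule DERIV_pos_imp_increasing_open[OF assms])
    fix x :: real assume x: "0 < x" "x < h"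
    have "((\<lambda>x. 1 - exp x + x * exp x) has_real_derivative (x * exp x)) (at x)"
      by (auto intro!: derivative_eq_intros simp: algebra_simps)
    then show "\<exists>y. ((\<lambda>x. 1 - exp x + x * exp x) has_real_derivative y) (at x) \<and> 0 < y"
      using x by (intro exI[of _ "x * exp x"]) auto
  next
    show "continuous_on {0..h} (\<lambda>x. 1 - exp x + x * exp x)" by (intro continuous_intros)
  qed
  thus ?thesis by simp
qed

lemma phi_pos:
  fixes h :: real assumes "0 < h" shows "h * (1 + exp h) - 2 * (exp h - 1) > 0"
proof -
  have "(\<lambda>x. x * (1 + exp x) - 2 * (exp x - 1)) 0 < (\<lambda>x. x * (1 + exp x) - 2 * (exp x - 1)) h"
  proof (rule DERIV_pos_imp_increasing_open[OF assms])
    fix x :: real assume x: "0 < x" "x < h"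
    have "((\<lambda>x. x * (1 + exp x) - 2 * (exp x - 1)) has_real_derivative (1 - exp x + x * exp x)) (at x)"
      by (auto intro!: derivative_eq_intros simp: algebra_simps)
    then show "\<exists>y. ((\<lambda>x. x * (1 + exp x) - 2 * (exp x - 1)) has_real_derivative y) (at x) \<and> 0 < y"
      using x phi1_pos[of x] by (intro exI[of _ "1 - exp x + x * exp x"]) auto
  next
    show "continuous_on {0..h} (\<lambda>x. x * (1 + exp x) - 2 * (exp x - 1))" by (intro continuous_intros)
  qed
  thus ?thesis by simp
qed

lemma psi_pos:
  fixes h L :: real assumes "0 < h" "L \<le> 2" shows "(L - h) * exp h < L + h"
proof -
  have e: "exp h - 1 > 0" using assms by simp
  have "L * (exp h - 1) \<le> 2 * (exp h - 1)" using e assms by (intro mult_right_mono) auto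
  with phi_pos[OF assms(1)] show ?thesis by (simp add: algebra_simps)
qed

lemma g_fix:
  assumes "1 < \<alpha>" "y = ln \<alpha> + h" shows "\<alpha> * ricker y = (ln \<alpha> + h) * exp (- h)"
proof -
  have "\<alpha> * exp (- y) = exp (- h)" using assms
    by (simp add: exp_diff exp_minus field_simps)
  have "\<alpha> * ricker y = y * (\<alpha> * exp (- y))" unfolding ricker_def by (simp only: ac_simps)
  also have "\<dots> = (ln \<alpha> + h) * exp (- h)" using assms(2) \<open>\<alpha> * exp (- y) = exp (- h)\<close> by simp
  finally show ?thesis .
qed

lemma rho_strict:
  assumes a: "1 < \<alpha>" "\<alpha> \<le> exp 2" and y: "0 < y" "y \<noteq> ln \<alpha>"
  shows "\<bar>\<alpha> * ricker y - ln \<alpha>\<bar> < \<bar>y - ln \<alpha>\<bar>"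
proof -
  define L where "L = ln \<alpha>"
  have L2: "L \<le> 2" using a unfolding L_def by (metis exp_gt_zero less_trans ln_exp ln_le_cancel_iff zero_less_one)
  show ?thesis
  proof (cases "y > L")
    case True
    define h where "h = y - L"
    have h: "0 < h" using True h_def by simp
    have eq: "\<alpha> * ricker y = (L + h) * exp (- h)" using g_fix[OF a(1), of y "y - ln \<alpha>"] h_def L_def by simp
    have "exp (-h) < 1" using h by simp
    moreover have "L + h > 0" using h_def y by simp
    ultimately have "(L + h) * exp (-h) < L + h" by (simp add: mult_less_cancel_left1)
    moreover have "L - h < (L + h) * exp (-h)"
    proof -
      have "(L - h) * exp h < L + h" by (rule psi_pos[OF h L2])
      hence "(L - h) * exp h * exp (-h) < (L + h) * exp (-h)" by (intro mult_strict_right_mono) auto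
      moreover have "(L - h) * exp h * exp (-h) = L - h" by (simp add: exp_minus)
      ultimately show ?thesis by simp
    qed
    ultimately show ?thesis unfolding eq L_def[symmetric] using h h_def by auto
  next
    case False
    hence yl: "y < L" using y L_def by auto
    define h where "h = L - y"
    have h: "0 < h" using yl h_def by simp
    have eq: "\<alpha> * ricker y = (L - h) * exp h" using g_fix[OF a(1), of y "y - ln \<alpha>"] h_def L_def by simp
    have "L - h < (L - h) * exp h" using h y h_def by simp
    moreover have "(L - h) * exp h < L + h" by (rule psi_pos[OF h L2])
    ultimately show ?thesis unfolding eq L_def[symmetric] using h h_def by auto
  qed
qed

lemma rho_weak:
  assumes a: "1 < \<alpha>" "\<alpha> \<le> exp 2" and y: "0 < y"
  shows "\<bar>\<alpha> * ricker y - ln \<alpha>\<bar> \<le> \<bar>y - ln \<alpha>\<bar>"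
proof (cases "y = ln \<alpha>")
  case True
  have "\<alpha> * ricker y = ln \<alpha>" using g_fix[OF a(1), of y 0] True by simp
  thus ?thesis by simp
qed (use rho_strict[OF a y] in auto)

lemma rho_compact:
  assumes a: "1 < \<alpha>" "\<alpha> \<le> exp 2" and S: "compact S" "\<And>y. y \<in> S \<Longrightarrow> 0 < y \<and> y \<noteq> ln \<alpha>"
  shows "\<exists>\<theta>>0. \<forall>y\<in>S. \<bar>\<alpha> * ricker y - ln \<alpha>\<bar> \<le> \<bar>y - ln \<alpha>\<bar> - \<theta>"
proof (cases "S = {}")
  case True thus ?thesis by (auto intro: exI[of _ 1])
next
  case False
  have "continuous_on S (\<lambda>y. \<bar>y - ln \<alpha>\<bar> - \<bar>\<alpha> * ricker y - ln \<alpha>\<bar>)"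
    unfolding ricker_def by (intro continuous_intros)
  from continuous_attains_inf[OF S(1) False this] obtain y0 where
    y0: "y0 \<in> S" "\<And>y. y \<in> S \<Longrightarrow> \<bar>y0 - ln \<alpha>\<bar> - \<bar>\<alpha> * ricker y0 - ln \<alpha>\<bar> \<le> \<bar>y - ln \<alpha>\<bar> - \<bar>\<alpha> * ricker y - ln \<alpha>\<bar>"
    by blast
  have "\<bar>\<alpha> * ricker y0 - ln \<alpha>\<bar> < \<bar>y0 - ln \<alpha>\<bar>" using rho_strict[OF a] S(2)[OF y0(1)] by auto
  thus ?thesis using y0 by (intro exI[of _ "\<bar>y0 - ln \<alpha>\<bar> - \<bar>\<alpha> * ricker y0 - ln \<alpha>\<bar>"]) force
qed

lemma g_lower:
  assumes a: "1 < \<alpha>" and y: "0 \<le> y" "y \<le> ln \<alpha> / 2"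
  shows "sqrt \<alpha> * y \<le> \<alpha> * ricker y"
proof -
  have "exp (ln \<alpha> / 2) * exp (ln \<alpha> / 2) = exp (ln \<alpha>)" by (simp add: exp_add[symmetric])
  hence "(exp (ln \<alpha> / 2))^2 = \<alpha>" using a by (simp add: power2_eq_square)
  hence s: "exp (ln \<alpha> / 2) = sqrt \<alpha>" by (intro real_sqrt_unique[symmetric]) auto
  have "exp (- y) \<ge> exp (- (ln \<alpha> / 2))" using y by simp
  also have "exp (- (ln \<alpha> / 2)) = inverse (sqrt \<alpha>)" by (simp only: exp_minus s)
  finally have e: "inverse (sqrt \<alpha>) \<le> exp (- y)" .
  have "\<alpha> * inverse (sqrt \<alpha>) = sqrt \<alpha>" using a real_div_sqrt[of \<alpha>] by (simp add: divide_inverse)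
  hence "sqrt \<alpha> \<le> \<alpha> * exp (-y)" using e a by (metis mult_left_mono less_imp_le less_trans zero_less_one)
  hence "sqrt \<alpha> * y \<le> \<alpha> * exp (-y) * y" using y by (intro mult_right_mono) auto
  thus ?thesis by (simp add: ricker_def algebra_simps)
qed

lemma set_integral_nonneg':
  fixes f :: "'a \<Rightarrow> real"
  assumes "\<And>x. x \<in> A \<Longrightarrow> 0 \<le> f x"
  shows "0 \<le> (LINT x:A|M. f x)"
  unfolding set_lebesgue_integral_def
  by (rule Bochner_Integration.integral_nonneg) (use assms in \<open>auto simp: indicator_def\<close>)

lemma set_integral_split_Icc:
  fixes f :: "real \<Rightarrow> real"
  assumes "set_integrable lborel {a..b} f" "a \<le> s" "s \<le> b"
  shows "(LINT x:{a..b}|lborel. f x) = (LINT x:{a..s}|lborel. f x) + (LINT x:{s<..b}|lborel. f x)"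
proof -
  have "{a..b} = {a..s} \<union> {s<..b}" using assms by auto
  moreover have "set_integrable lborel {a..s} f" by (rule set_integrable_subset[OF assms(1)]) (use assms in auto)
  moreover have "set_integrable lborel {s<..b} f" by (rule set_integrable_subset[OF assms(1)]) (use assms in auto)
  moreover have "{a..s} \<inter> {s<..b} = {}" by auto
  ultimately show ?thesis using set_integral_Un[of "{a..s}" "{s<..b}" lborel f] by simp
qed

lemma set_integral_split_Ioc:
  fixes f :: "real \<Rightarrow> real"
  assumes "set_integrable lborel {a<..b} f" "a \<le> s" "s \<le> b"
  shows "(LINT x:{a<..b}|lborel. f x) = (LINT x:{a<..s}|lborel. f x) + (LINT x:{s<..b}|lborel. f x)"
proof -
  have "{a<..b} = {a<..s} \<union> {s<..b}" using assms by auto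
  moreover have "set_integrable lborel {a<..s} f" by (rule set_integrable_subset[OF assms(1)]) (use assms in auto)
  moreover have "set_integrable lborel {s<..b} f" by (rule set_integrable_subset[OF assms(1)]) (use assms in auto)
  ultimately show ?thesis using set_integral_Un[of "{a<..s}" "{s<..b}" lborel f] by auto
qed

lemma set_integral_subset_le:
  fixes f :: "real \<Rightarrow> real"
  assumes "set_integrable lborel T f" "S \<in> sets borel" "T \<in> sets borel" "S \<subseteq> T" "\<And>x. x \<in> T \<Longrightarrow> 0 \<le> f x"
  shows "(LINT x:S|lborel. f x) \<le> (LINT x:T|lborel. f x)"
proof -
  have T: "T = S \<union> (T - S)" using assms by auto
  have i1: "set_integrable lborel S f" by (rule set_integrable_subset[OF assms(1)]) (use assms in auto)
  have i2: "set_integrable lborel (T - S) f" by (rule set_integrable_subset[OF assms(1)]) (use assms in auto)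
  have "(LINT x:T|lborel. f x) = (LINT x:S|lborel. f x) + (LINT x:T - S|lborel. f x)"
    by (subst T, rule set_integral_Un) (use i1 i2 in auto)
  moreover have "0 \<le> (LINT x:T - S|lborel. f x)" by (rule set_integral_nonneg') (use assms in auto)
  ultimately show ?thesis by simp
qed

lemma set_integral_const_Icc:
  "a \<le> b \<Longrightarrow> (LINT x:{a..b}|lborel. (c::real)) = c * (b - a)"
  by (subst set_integral_const) (auto simp: emeasure_lborel_Icc_eq)

lemma set_integral_const_Ioc:
  "a \<le> b \<Longrightarrow> (LINT x:{a<..b}|lborel. (c::real)) = c * (b - a)"
  by (subst set_integral_const) (auto simp: emeasure_lborel_Ioc)

lemma set_integrable_const_Ioc:
  fixes a b :: real assumes "a \<le> b" shows "set_integrable lborel {a<..b} (\<lambda>_. (c::real))"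
proof -
  have "integrable lborel (indicator {a<..b} :: real \<Rightarrow> real)"
    using assms by (simp add: integrable_indicator_iff)
  hence "integrable lborel (\<lambda>x. indicator {a<..b} x * c)" by (rule integrable_mult_left)
  thus ?thesis unfolding set_integrable_def by (simp add: mult.commute)
qed

lemma set_integrable_const_Icc:
  fixes a b :: real assumes "a \<le> b" shows "set_integrable lborel {a..b} (\<lambda>_. (c::real))"
proof -
  have "integrable lborel (indicator {a..b} :: real \<Rightarrow> real)"
    using assms by (simp add: integrable_indicator_iff)
  hence "integrable lborel (\<lambda>x. indicator {a..b} x * c)" by (rule integrable_mult_left)
  thus ?thesis unfolding set_integrable_def by (simp add: mult.commute)
qed

locale renew =
  fixes \<alpha> C Fm :: real and k F b :: "real \<Rightarrow> real"
  assumes alpha: "1 < \<alpha>" "\<alpha> \<le> exp 2"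
    and k_meas[measurable]: "k \<in> borel_measurable borel"
    and k_nonneg: "\<And>a. 0 \<le> k a" and k_le: "\<And>a. k a \<le> C"
    and k_zero: "\<And>a. a \<le> 0 \<Longrightarrow> k a = 0"
    and k_int: "integrable lborel k" and k_one: "integral\<^sup>L lborel k = 1"
    and F_nonneg: "\<And>t. 0 \<le> t \<Longrightarrow> 0 \<le> F t" and F_le: "\<And>t. 0 \<le> t \<Longrightarrow> F t \<le> Fm"
    and F_lim: "(F \<longlongrightarrow> 0) at_top"
    and b_cont: "continuous_on {0..} b"
    and b_eq: "\<And>t. 0 \<le> t \<Longrightarrow> b t = \<alpha> * ricker (F t + (LINT a:{0..t}|lborel. k a * b (t - a)))"
begin

definition "L = ln \<alpha>"
definition "K s = (LINT a:{0..s}|lborel. k a)"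
definition "cv t = (LINT a:{0..t}|lborel. k a * b (t - a))"
definition "xx t = F t + cv t"

lemma b_eq': "0 \<le> t \<Longrightarrow> b t = \<alpha> * ricker (xx t)"
  using b_eq unfolding xx_def cv_def by auto

lemma C_nonneg: "0 \<le> C" using k_nonneg[of 0] k_le[of 0] by simp

lemma L_pos: "0 < L" unfolding L_def using alpha by simp

lemma k_setint: "A \<in> sets borel \<Longrightarrow> set_integrable lborel A k"
  unfolding set_integrable_def by (rule integrable_mult_indicator) (use k_int in auto)

lemma cont_setint:
  assumes t: "0 \<le> t" and h: "continuous_on {0..t} h"
  shows "set_integrable lborel {0..t} (\<lambda>a. k a * h a)"
proof -
  have "continuous_on {0..t} (\<lambda>a. \<bar>h a\<bar>)" using h by (intro continuous_intros)
  from continuous_attains_sup[OF compact_Icc _ this] t obtain a0 where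
    a0: "a0 \<in> {0..t}" "\<And>a. a \<in> {0..t} \<Longrightarrow> \<bar>h a\<bar> \<le> \<bar>h a0\<bar>" by auto
  define M where "M = \<bar>h a0\<bar>"
  show ?thesis
  proof (rule set_integrable_bound[of lborel "{0..t}" "\<lambda>a. M * k a"])
    show "set_integrable lborel {0..t} (\<lambda>a. M * k a)"
      using k_setint[of "{0..t}"] by auto
    have "(\<lambda>a. indicator {0..t} a *\<^sub>R h a) \<in> borel_measurable borel"
      by (rule borel_measurable_continuous_on_indicator) (use h in auto)
    hence "(\<lambda>a. k a * (indicator {0..t} a *\<^sub>R h a)) \<in> borel_measurable borel" by measurable
    moreover have "(\<lambda>a. k a * (indicator {0..t} a *\<^sub>R h a)) = (\<lambda>a. indicator {0..t} a *\<^sub>R (k a * h a))"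
      by (auto simp: indicator_def)
    ultimately show "set_borel_measurable lborel {0..t} (\<lambda>a. k a * h a)"
      unfolding set_borel_measurable_def by simp
    show "AE a in lborel. a \<in> {0..t} \<longrightarrow> norm (k a * h a) \<le> norm (M * k a)"
    proof (intro AE_I2 impI)
      fix a assume "a \<in> {0..t}"
      hence "\<bar>h a\<bar> \<le> M" using a0 M_def by auto
      hence "k a * \<bar>h a\<bar> \<le> k a * M" using k_nonneg by (intro mult_left_mono) auto
      moreover have "0 \<le> M" using M_def by simp
      ultimately show "norm (k a * h a) \<le> norm (M * k a)" using k_nonneg[of a]
        by (simp add: abs_mult mult.commute)
    qed
  qed
qed

lemma b_shift_cont: "0 \<le> t \<Longrightarrow> continuous_on {0..t} (\<lambda>a. b (t - a))"
  by (rule continuous_on_compose2[OF b_cont]) (auto intro!: continuous_intros)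

lemma cv_int: "0 \<le> t \<Longrightarrow> set_integrable lborel {0..t} (\<lambda>a. k a * b (t - a))"
  by (rule cont_setint) (auto intro: b_shift_cont)

lemma cv_int_sub: "0 \<le> t \<Longrightarrow> S \<in> sets borel \<Longrightarrow> S \<subseteq> {0..t} \<Longrightarrow> set_integrable lborel S (\<lambda>a. k a * b (t - a))"
  by (rule set_integrable_subset[OF cv_int]) auto

lemma K_nonneg: "0 \<le> K s"
  unfolding K_def by (rule set_integral_nonneg') (use k_nonneg in auto)

lemma K_split: "0 \<le> s \<Longrightarrow> s \<le> s' \<Longrightarrow> K s' = K s + (LINT a:{s<..s'}|lborel. k a)"
  unfolding K_def by (rule set_integral_split_Icc) (auto intro: k_setint)

lemma K_mono: "0 \<le> s \<Longrightarrow> s \<le> s' \<Longrightarrow> K s \<le> K s'"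
  using K_split[of s s'] set_integral_nonneg'[of "{s<..s'}" k lborel] k_nonneg by auto

lemma K_lip: "0 \<le> s \<Longrightarrow> s \<le> s' \<Longrightarrow> K s' - K s \<le> C * (s' - s)"
proof -
  assume s: "0 \<le> s" "s \<le> s'"
  have "(LINT a:{s<..s'}|lborel. k a) \<le> (LINT a:{s<..s'}|lborel. C)"
    by (rule set_integral_mono) (use s k_setint k_le set_integrable_const_Ioc in auto)
  also have "\<dots> = C * (s' - s)" using s by (simp add: set_integral_const_Ioc)
  finally show ?thesis using K_split[OF s] by simp
qed

lemma K_le_C: "0 \<le> s \<Longrightarrow> K s \<le> C * s"
proof -
  assume s: "0 \<le> s"
  have "K s \<le> (LINT a:{0..s}|lborel. C)"
    unfolding K_def by (rule set_integral_mono) (use s k_setint k_le set_integrable_const_Icc in auto)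
  also have "\<dots> = C * s" using s by (simp add: set_integral_const_Icc)
  finally show ?thesis .
qed

lemma K_zero: "K 0 = 0"
  using K_le_C[of 0] K_nonneg[of 0] by simp

lemma k_Ici: "(LINT a:{0..}|lborel. k a) = 1"
proof -
  have "(LINT a:{0..}|lborel. k a) = integral\<^sup>L lborel k"
    unfolding set_lebesgue_integral_def
    by (rule Bochner_Integration.integral_cong) (auto simp: indicator_def k_zero)
  thus ?thesis using k_one by simp
qed

lemma K_tail: "0 \<le> s \<Longrightarrow> K s + (LINT a:{s<..}|lborel. k a) = 1"
proof -
  assume s: "0 \<le> s"
  have "{0..} = {0..s} \<union> {s<..}" using s by auto
  hence "(LINT a:{0..}|lborel. k a) = (LINT a:{0..s} \<union> {s<..}|lborel. k a)" by simp
  also have "\<dots> = K s + (LINT a:{s<..}|lborel. k a)"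
    unfolding K_def by (rule set_integral_Un) (auto intro: k_setint)
  finally show ?thesis using k_Ici by simp
qed

lemma K_le1: "0 \<le> s \<Longrightarrow> K s \<le> 1"
  using K_tail[of s] set_integral_nonneg'[of "{s<..}" k lborel] k_nonneg by auto

lemma K_lim: "(K \<longlongrightarrow> 1) at_top"
proof -
  have "((\<lambda>s. LINT a:{0..s}|lborel. k a) \<longlongrightarrow> (LINT a:{0..}|lborel. k a)) at_top"
    by (rule tendsto_set_lebesgue_integral_at_top) (auto intro: k_setint)
  thus ?thesis using k_Ici unfolding K_def[abs_def] by simp
qed

lemma cv_bound_below:
  assumes "0 \<le> t" "\<And>a. a \<in> {0..t} \<Longrightarrow> lo \<le> b (t - a)"
  shows "lo * K t \<le> cv t"
proof -
  have "\<And>a. a \<in> {0..t} \<Longrightarrow> lo * k a \<le> k a * b (t - a)"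
    using assms k_nonneg by (metis mult.commute mult_left_mono)
  hence "(LINT a:{0..t}|lborel. lo * k a) \<le> cv t"
    unfolding cv_def
    by (intro set_integral_mono) (use assms cv_int k_setint in auto)
  thus ?thesis unfolding K_def by simp
qed

lemma cv_bound_above:
  assumes "0 \<le> t" "\<And>a. a \<in> {0..t} \<Longrightarrow> b (t - a) \<le> hi"
  shows "cv t \<le> hi * K t"
proof -
  have "\<And>a. a \<in> {0..t} \<Longrightarrow> k a * b (t - a) \<le> hi * k a"
    using assms k_nonneg by (metis mult.commute mult_left_mono)
  hence "cv t \<le> (LINT a:{0..t}|lborel. hi * k a)"
    unfolding cv_def
    by (intro set_integral_mono) (use assms cv_int k_setint in auto)
  thus ?thesis unfolding K_def by simp
qed

lemma b_le: "0 \<le> t \<Longrightarrow> b t \<le> \<alpha> * exp (-1)"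
  using b_eq'[of t] ricker_le[of "xx t"] alpha by simp

end

context renew begin

lemma b_nonneg: "0 \<le> t \<Longrightarrow> 0 \<le> b t"
proof (rule ccontr)
  assume t: "0 \<le> t" "\<not> 0 \<le> b t"
  define Z where "Z = {s. 0 \<le> s \<and> b s < 0}"
  have tZ: "t \<in> Z" using t Z_def by auto
  have bdd: "bdd_below Z" unfolding Z_def by (rule bdd_belowI[of _ 0]) auto
  define t0 where "t0 = Inf Z"
  have t0_nonneg: "0 \<le> t0" unfolding t0_def using tZ by (intro cInf_greatest) (auto simp: Z_def)
  have below: "\<And>s. 0 \<le> s \<Longrightarrow> s < t0 \<Longrightarrow> 0 \<le> b s"
  proof (rule ccontr)
    fix s assume s: "0 \<le> s" "s < t0" "\<not> 0 \<le> b s"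
    hence "s \<in> Z" by (auto simp: Z_def)
    hence "t0 \<le> s" unfolding t0_def using bdd by (rule cInf_lower)
    thus False using s by simp
  qed
  have bc: "continuous_on S b" if "S \<subseteq> {0..}" for S using continuous_on_subset[OF b_cont that] .
  have "continuous_on {t0..t0+1} (\<lambda>s. \<bar>b s\<bar>)" using t0_nonneg by (intro continuous_intros bc) auto
  from continuous_attains_sup[OF compact_Icc _ this] obtain sM where
    sM: "sM \<in> {t0..t0+1}" "\<And>s. s \<in> {t0..t0+1} \<Longrightarrow> \<bar>b s\<bar> \<le> \<bar>b sM\<bar>" by auto
  define M where "M = \<bar>b sM\<bar>"
  have M0: "0 \<le> M" unfolding M_def by simp
  define E where "E = exp ((C + 1) * (M + 1))"
  have E0: "0 < E" unfolding E_def by simp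
  define h where "h = min 1 (1 / (2 * \<alpha> * (C + 1) * E))"
  have apos: "0 < \<alpha>" using alpha by simp
  have h0: "0 < h" unfolding h_def using apos C_nonneg E0 by auto
  have h1: "h \<le> 1" unfolding h_def by simp
  have h2: "\<alpha> * (C + 1) * E * h \<le> 1/2"
  proof -
    have p: "0 < \<alpha> * (C + 1) * E" using apos C_nonneg E0 by auto
    have "h \<le> 1 / (2 * (\<alpha> * (C + 1) * E))" unfolding h_def by (simp add: mult.assoc)
    hence "\<alpha> * (C + 1) * E * h \<le> \<alpha> * (C + 1) * E * (1 / (2 * (\<alpha> * (C + 1) * E)))"
      using p by (intro mult_left_mono) auto
    also have "\<dots> = 1/2" using p by (simp add: field_simps)
    finally show ?thesis .
  qed
  have "continuous_on {t0..t0+h} (\<lambda>s. max 0 (- b s))" using t0_nonneg by (intro continuous_intros bc) auto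
  from continuous_attains_sup[OF compact_Icc _ this] h0 obtain s1 where
    s1: "s1 \<in> {t0..t0+h}" "\<And>s. s \<in> {t0..t0+h} \<Longrightarrow> max 0 (- b s) \<le> max 0 (- b s1)" by auto
  define m where "m = max 0 (- b s1)"
  have "Inf Z < t0 + h" using h0 t0_def by simp
  then obtain z where z: "z \<in> Z" "z < t0 + h" using cInf_less_iff[of Z] tZ bdd by blast
  have "t0 \<le> z" unfolding t0_def using z(1) bdd by (rule cInf_lower)
  hence "- b z \<le> m" using s1(2)[of z] z m_def by auto
  moreover have "0 < - b z" using z Z_def by auto
  ultimately have mpos: "0 < m" by simp
  hence bs1: "b s1 = - m" unfolding m_def by auto
  have s1pos: "0 \<le> s1" using s1 t0_nonneg by auto
  have "\<alpha> * ricker (xx s1) < 0" using b_eq'[OF s1pos] bs1 mpos by simp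
  hence xneg: "xx s1 < 0" using ricker_nonneg[of "xx s1"] apos
    by (metis linorder_not_le mult_nonneg_nonneg less_imp_le)
  have mM: "m \<le> M"
  proof -
    have "s1 \<in> {t0..t0+1}" using s1 h1 by auto
    thus ?thesis using sM(2)[of s1] bs1 M_def by simp
  qed
  have split: "cv s1 = (LINT a:{0..s1-t0}|lborel. k a * b (s1 - a)) + (LINT a:{s1-t0<..s1}|lborel. k a * b (s1 - a))"
    unfolding cv_def by (rule set_integral_split_Icc) (use s1 t0_nonneg cv_int[OF s1pos] in auto)
  have p2: "0 \<le> (LINT a:{s1-t0<..s1}|lborel. k a * b (s1 - a))"
  proof (rule set_integral_nonneg')
    fix a assume "a \<in> {s1-t0<..s1}"
    hence "0 \<le> s1 - a" "s1 - a < t0" by auto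
    thus "0 \<le> k a * b (s1 - a)" using below k_nonneg by simp
  qed
  have p1: "- (C * m) * (s1 - t0) \<le> (LINT a:{0..s1-t0}|lborel. k a * b (s1 - a))"
  proof -
    have "(LINT a:{0..s1-t0}|lborel. - (C * m)) \<le> (LINT a:{0..s1-t0}|lborel. k a * b (s1 - a))"
    proof (rule set_integral_mono)
      show "set_integrable lborel {0..s1 - t0} (\<lambda>a. - (C * m))" using s1 by (intro set_integrable_const_Icc) auto
      show "set_integrable lborel {0..s1 - t0} (\<lambda>a. k a * b (s1 - a))"
        using s1 t0_nonneg by (intro cv_int_sub) auto
      fix a assume a: "a \<in> {0..s1 - t0}"
      hence "s1 - a \<in> {t0..t0+h}" using s1 by auto
      hence "- b (s1 - a) \<le> m" using s1(2)[of "s1 - a"] m_def by auto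
      hence "k a * (- m) \<le> k a * b (s1 - a)" using k_nonneg[of a] by (intro mult_left_mono) auto
      moreover have "k a * m \<le> C * m" using k_le[of a] mpos by (intro mult_right_mono) auto
      ultimately show "- (C * m) \<le> k a * b (s1 - a)" by simp
    qed
    thus ?thesis using s1 by (simp add: set_integral_const_Icc)
  qed
  have "- (C * m) * h \<le> - (C * m) * (s1 - t0)"
    using s1 C_nonneg mpos by (intro mult_left_mono_neg) auto
  hence xlow: "- (C * m * h) \<le> xx s1"
    using split p1 p2 F_nonneg[OF s1pos] unfolding xx_def by simp
  define y where "y = - xx s1"
  have y0: "0 < y" "y \<le> C * m * h" using xneg xlow y_def by auto
  have "m = \<alpha> * (y * exp y)"
    using b_eq'[OF s1pos] bs1 unfolding ricker_def y_def by simp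
  also have "\<dots> \<le> \<alpha> * ((C * m * h) * E)"
  proof -
    have "C * m * h \<le> (C + 1) * (M + 1)"
    proof -
      have "C * m * h \<le> C * m * 1" using C_nonneg mpos h1 by (intro mult_left_mono) auto
      also have "\<dots> \<le> (C + 1) * (M + 1)" using C_nonneg mpos mM mult_mono[of C "C+1" m "M+1"] by simp
      finally show ?thesis .
    qed
    hence "exp y \<le> E" unfolding E_def using y0 by simp
    hence "y * exp y \<le> (C * m * h) * E" using y0 by (intro mult_mono) auto
    thus ?thesis using apos by simp
  qed
  also have "\<dots> \<le> (\<alpha> * (C + 1) * E * h) * m"
  proof -
    have "C * m * h * E \<le> (C + 1) * m * h * E" using mpos h0 E0 by (intro mult_right_mono) auto
    hence "\<alpha> * (C * m * h * E) \<le> \<alpha> * ((C + 1) * m * h * E)" using apos by (intro mult_left_mono) auto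
    thus ?thesis by (simp add: algebra_simps)
  qed
  also have "\<dots> \<le> (1/2) * m" using h2 mpos by (intro mult_right_mono) auto
  finally show False using mpos by simp
qed

lemma cv_nonneg: "0 \<le> t \<Longrightarrow> 0 \<le> cv t"
  using cv_bound_below[of t 0] b_nonneg by simp

lemma xx_ge_F: "0 \<le> t \<Longrightarrow> F t \<le> xx t"
  using cv_nonneg unfolding xx_def by simp

lemma xx_nonneg: "0 \<le> t \<Longrightarrow> 0 \<le> xx t"
  using xx_ge_F F_nonneg by (meson order_trans)

definition "B = \<alpha> * exp (-1)"

lemma B_pos: "0 < B" unfolding B_def using alpha by simp

lemma cv_le: "0 \<le> t \<Longrightarrow> cv t \<le> B"
proof -
  assume t: "0 \<le> t"
  have "cv t \<le> B * K t" using cv_bound_above[of t B] t b_le unfolding B_def by simp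
  also have "\<dots> \<le> B * 1" using K_le1[OF t] B_pos by (intro mult_left_mono) auto
  finally show ?thesis by simp
qed

lemma xx_le: "0 \<le> t \<Longrightarrow> xx t \<le> Fm + B"
  using cv_le F_le unfolding xx_def by (simp add: add_mono)

lemma b_pos_if_xx: "0 \<le> t \<Longrightarrow> 0 < xx t \<Longrightarrow> 0 < b t"
  using b_eq' ricker_pos alpha by simp

end

context renew begin

lemma cv_Ioc: "0 \<le> t \<Longrightarrow> cv t = (LINT a:{0<..t}|lborel. k a * b (t - a))"
proof -
  assume t: "0 \<le> t"
  have "cv t = (LINT a:{0..0}|lborel. k a * b (t - a)) + (LINT a:{0<..t}|lborel. k a * b (t - a))"
    unfolding cv_def by (rule set_integral_split_Icc) (use t cv_int in auto)
  moreover have "(\<lambda>a. indicator {0..0} a *\<^sub>R (k a * b (t - a))) = (\<lambda>a. 0::real)"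
    by (auto simp: k_zero indicator_def fun_eq_iff)
  hence "(LINT a:{0..0}|lborel. k a * b (t - a)) = 0"
    unfolding set_lebesgue_integral_def by simp
  ultimately show ?thesis by simp
qed

lemma K_Ioc: "0 \<le> t \<Longrightarrow> K t = (LINT a:{0<..t}|lborel. k a)"
  using K_split[of 0 t] K_zero by simp

lemma seg_bound:
  assumes "0 \<le> u" "u \<le> v" "v \<le> t" "\<And>a. u < a \<Longrightarrow> a \<le> v \<Longrightarrow> \<bar>b (t - a) - c\<bar> \<le> r"
  shows "\<bar>(LINT a:{u<..v}|lborel. k a * b (t - a)) - c * (K v - K u)\<bar> \<le> r * (K v - K u)"
proof -
  have i1: "set_integrable lborel {u<..v} (\<lambda>a. k a * b (t - a))"
    by (rule cv_int_sub) (use assms in auto)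
  have i2: "set_integrable lborel {u<..v} (\<lambda>a. c * k a)" using k_setint by auto
  have kd: "K v - K u = (LINT a:{u<..v}|lborel. k a)" using K_split[of u v] assms by simp
  have "(LINT a:{u<..v}|lborel. k a * b (t - a)) - c * (K v - K u)
      = (LINT a:{u<..v}|lborel. k a * b (t - a) - c * k a)"
    using kd set_integral_diff(2)[OF i1 i2] by simp
  also have "\<bar>\<dots>\<bar> \<le> (LINT a:{u<..v}|lborel. \<bar>k a * b (t - a) - c * k a\<bar>)"
    using set_integral_norm_bound[OF set_integral_diff(1)[OF i1 i2]] by simp
  also have "\<dots> \<le> (LINT a:{u<..v}|lborel. r * k a)"
  proof (rule set_integral_mono)
    show "set_integrable lborel {u<..v} (\<lambda>a. \<bar>k a * b (t - a) - c * k a\<bar>)"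
      by (rule set_integrable_abs) (rule set_integral_diff(1)[OF i1 i2])
    show "set_integrable lborel {u<..v} (\<lambda>a. r * k a)" using k_setint by auto
    fix a assume a: "a \<in> {u<..v}"
    have "k a * b (t - a) - c * k a = k a * (b (t - a) - c)" by (simp add: algebra_simps)
    hence "\<bar>k a * b (t - a) - c * k a\<bar> = k a * \<bar>b (t - a) - c\<bar>"
      using k_nonneg[of a] by (simp add: abs_mult)
    also have "\<dots> \<le> k a * r" using assms(4)[of a] a k_nonneg[of a] by (intro mult_left_mono) auto
    finally show "\<bar>k a * b (t - a) - c * k a\<bar> \<le> r * k a" by (simp add: mult.commute)
  qed
  also have "\<dots> = r * (K v - K u)" using kd by simp
  finally show ?thesis .
qed

lemma stab:
  assumes e: "0 < e" "2 * e < L"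
    and th: "0 < \<theta>" "\<forall>y. e \<le> \<bar>y - L\<bar> \<and> \<bar>y - L\<bar> \<le> 2 * e \<longrightarrow> \<bar>\<alpha> * ricker y - L\<bar> \<le> \<bar>y - L\<bar> - \<theta>"
    and d: "d < \<theta>" "d \<le> e"
    and Fb: "\<forall>s\<ge>0. \<bar>F s - L + L * K s\<bar> \<le> d"
  shows "\<forall>s\<ge>0. \<bar>b s - L\<bar> < e"
proof -
  have key: "\<bar>b s - L\<bar> < e" if s: "0 \<le> s" and prev: "\<And>s'. 0 \<le> s' \<Longrightarrow> s' < s \<Longrightarrow> \<bar>b s' - L\<bar> < e" for s
  proof -
    have "\<bar>cv s - L * (K s - K 0)\<bar> \<le> e * (K s - K 0)"
      unfolding cv_Ioc[OF s] by (rule seg_bound) (use s prev in \<open>auto intro: less_imp_le\<close>)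
    hence c1: "\<bar>cv s - L * K s\<bar> \<le> e" using K_zero K_le1[OF s] e
      by (smt (verit) mult_left_le mult.commute)
    have "xx s - L = (F s - L + L * K s) + (cv s - L * K s)" unfolding xx_def by simp
    hence xl: "\<bar>xx s - L\<bar> \<le> d + e" using Fb s c1 by (smt (verit))
    have ypos: "0 < xx s" using xl d e by linarith
    show ?thesis
    proof (cases "\<bar>xx s - L\<bar> < e")
      case True
      thus ?thesis using rho_weak[OF alpha ypos] b_eq'[OF s] unfolding L_def by simp
    next
      case False
      hence "\<bar>\<alpha> * ricker (xx s) - L\<bar> \<le> \<bar>xx s - L\<bar> - \<theta>" using th(2) xl d by simp
      thus ?thesis using b_eq'[OF s] xl d by simp
    qed
  qed
  show ?thesis
  proof (rule ccontr)
    assume "\<not> (\<forall>s\<ge>0. \<bar>b s - L\<bar> < e)"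
    then obtain t where t: "0 \<le> t" "e \<le> \<bar>b t - L\<bar>" by auto
    define Z where "Z = {s. 0 \<le> s \<and> e \<le> \<bar>b s - L\<bar>}"
    have tZ: "t \<in> Z" using t Z_def by auto
    have bdd: "bdd_below Z" unfolding Z_def by (rule bdd_belowI[of _ 0]) auto
    define t0 where "t0 = Inf Z"
    have t00: "0 \<le> t0" unfolding t0_def using tZ by (intro cInf_greatest) (auto simp: Z_def)
    have below: "\<And>s. 0 \<le> s \<Longrightarrow> s < t0 \<Longrightarrow> \<bar>b s - L\<bar> < e"
    proof (rule ccontr)
      fix s assume s: "0 \<le> s" "s < t0" "\<not> \<bar>b s - L\<bar> < e"
      hence "s \<in> Z" by (auto simp: Z_def)
      hence "t0 \<le> s" unfolding t0_def using bdd by (rule cInf_lower)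
      thus False using s by simp
    qed
    have at0: "\<bar>b t0 - L\<bar> < e" by (rule key[OF t00 below])
    define e' where "e' = e - \<bar>b t0 - L\<bar>"
    have e'0: "0 < e'" using at0 e'_def by simp
    from b_cont t00 e'0 obtain \<eta> where eta: "0 < \<eta>" "\<And>s. s \<in> {0..} \<Longrightarrow> dist s t0 < \<eta> \<Longrightarrow> dist (b s) (b t0) < e'"
      unfolding continuous_on_iff by (metis atLeast_iff)
    have "t0 + \<eta> \<le> Inf Z"
    proof (rule cInf_greatest)
      show "Z \<noteq> {}" using tZ by auto
      fix z assume z: "z \<in> Z"
      have "t0 \<le> z" unfolding t0_def using z bdd by (rule cInf_lower)
      show "t0 + \<eta> \<le> z"
      proof (rule ccontr)
        assume "\<not> t0 + \<eta> \<le> z"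
        hence "dist z t0 < \<eta>" using \<open>t0 \<le> z\<close> by (simp add: dist_real_def)
        hence "dist (b z) (b t0) < e'" using eta z Z_def by auto
        hence "\<bar>b z - L\<bar> < e" using e'_def by (simp add: dist_real_def)
        thus False using z Z_def by auto
      qed
    qed
    thus False using eta t0_def by simp
  qed
qed

end

context renew begin

lemma seg_lower:
  assumes "0 \<le> u" "u \<le> v" "v \<le> t" "\<And>a. u < a \<Longrightarrow> a \<le> v \<Longrightarrow> lo \<le> b (t - a)"
  shows "lo * (K v - K u) \<le> (LINT a:{u<..v}|lborel. k a * b (t - a))"
proof -
  have kd: "K v - K u = (LINT a:{u<..v}|lborel. k a)" using K_split[of u v] assms by simp
  have "(LINT a:{u<..v}|lborel. lo * k a) \<le> (LINT a:{u<..v}|lborel. k a * b (t - a))"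
  proof (rule set_integral_mono)
    show "set_integrable lborel {u<..v} (\<lambda>a. lo * k a)" using k_setint by auto
    show "set_integrable lborel {u<..v} (\<lambda>a. k a * b (t - a))" by (rule cv_int_sub) (use assms in auto)
    fix a assume "a \<in> {u<..v}"
    thus "lo * k a \<le> k a * b (t - a)" using assms(4)[of a] k_nonneg[of a]
      by (metis greaterThanAtMost_iff mult.commute mult_left_mono)
  qed
  thus ?thesis using kd by simp
qed

lemma cv_ge_seg:
  assumes "0 \<le> u" "u \<le> v" "v \<le> t"
  shows "(LINT a:{u<..v}|lborel. k a * b (t - a)) \<le> cv t"
  unfolding cv_def
proof (rule set_integral_subset_le)
  show "set_integrable lborel {0..t} (\<lambda>a. k a * b (t - a))" using cv_int assms by auto
  fix a assume "a \<in> {0..t}"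
  thus "0 \<le> k a * b (t - a)" using k_nonneg b_nonneg by simp
qed (use assms in auto)

definition "Pk a \<longleftrightarrow> (\<forall>\<epsilon>>0. 0 < (LINT s:{a<..a+\<epsilon>}|lborel. k s))"

lemma spread:
  assumes pq: "0 \<le> p" "p < q" and pos: "\<And>s. p < s \<Longrightarrow> s < q \<Longrightarrow> 0 < b s"
    and a: "0 < a" "Pk a" and t: "p + a < t" "t < q + a"
  shows "0 < b t"
proof -
  define \<epsilon> where "\<epsilon> = (t - a - p) / 2"
  have e0: "0 < \<epsilon>" using t \<epsilon>_def by simp
  define lo where "lo = t - a - \<epsilon>"
  have lo: "p < lo" "lo \<le> t - a" "t - a < q" using t e0 unfolding lo_def \<epsilon>_def by (auto simp: field_simps)
  have "continuous_on {lo..t-a} b" by (rule continuous_on_subset[OF b_cont]) (use lo pq in auto)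
  from continuous_attains_inf[OF compact_Icc _ this] lo obtain s0 where
    s0: "s0 \<in> {lo..t-a}" "\<And>s. s \<in> {lo..t-a} \<Longrightarrow> b s0 \<le> b s" by auto
  have c0: "0 < b s0" using pos s0 lo by auto
  have tt: "0 \<le> t" using t pq a by simp
  have "b s0 * (K (a + \<epsilon>) - K a) \<le> (LINT s:{a<..a+\<epsilon>}|lborel. k s * b (t - s))"
    by (rule seg_lower) (use a e0 lo lo_def pq s0 in auto)
  also have "\<dots> \<le> cv t" by (rule cv_ge_seg) (use a e0 lo lo_def pq in auto)
  finally have "b s0 * (K (a + \<epsilon>) - K a) \<le> cv t" .
  moreover have "K (a + \<epsilon>) - K a > 0" using K_split[of a "a + \<epsilon>"] a e0 unfolding Pk_def by auto
  ultimately have "0 < cv t" using c0 by (smt (verit) mult_pos_pos)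
  hence "0 < xx t" using F_nonneg[OF tt] unfolding xx_def by simp
  thus ?thesis using b_pos_if_xx tt by simp
qed

lemma grow:
  assumes pq: "0 \<le> p" "p < q" and pos: "\<And>s. p < s \<Longrightarrow> s < q \<Longrightarrow> 0 < b s"
    and a: "0 < a" "a < a'" "a' - a < q - p" "Pk a" "Pk a'"
  shows "p + real n * a < t \<Longrightarrow> t < q + real n * a' \<Longrightarrow> 0 < b t"
proof (induction n arbitrary: t)
  case 0 thus ?case using pos by simp
next
  case (Suc n)
  define pn where "pn = p + real n * a"
  define qn where "qn = q + real n * a'"
  have pn0: "0 \<le> pn" using pq a pn_def by simp
  have gap: "a' - a < qn - pn"
  proof -
    have "real n * a \<le> real n * a'" using a by (intro mult_left_mono) auto
    thus ?thesis using a pn_def qn_def by simp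
  qed
  have pq': "pn < qn" using gap a by simp
  have posn: "\<And>s. pn < s \<Longrightarrow> s < qn \<Longrightarrow> 0 < b s" using Suc.IH pn_def qn_def by simp
  have t1: "pn + a < t" "t < qn + a'" using Suc.prems pn_def qn_def by (simp_all add: algebra_simps)
  show ?case
  proof (cases "t < qn + a")
    case True
    show ?thesis by (rule spread[OF pn0 pq' posn a(1) a(4)]) (use t1 True in auto)
  next
    case False
    hence "pn + a' < t" using gap by simp
    show ?thesis by (rule spread[OF pn0 pq' posn _ a(5)]) (use t1 False a \<open>pn + a' < t\<close> in auto)
  qed
qed

definition "lev c = Sup {a. 0 \<le> a \<and> K a \<le> c}"

lemma lev_props:
  assumes c: "0 < c" "c < 1"
  shows "0 < lev c" "K (lev c) = c" "Pk (lev c)" "bdd_above {a. 0 \<le> a \<and> K a \<le> c}"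
proof -
  define S where "S = {a. 0 \<le> a \<and> K a \<le> c}"
  have "\<forall>\<^sub>F s in at_top. c < K s" using order_tendstoD(1)[OF K_lim] c by simp
  then obtain N where N: "\<And>s. s \<ge> N \<Longrightarrow> c < K s" by (auto simp: eventually_at_top_linorder)
  have bdd: "bdd_above S" unfolding S_def
  proof (rule bdd_aboveI[of _ N])
    fix x assume "x \<in> {a. 0 \<le> a \<and> K a \<le> c}"
    thus "x \<le> N" using N[of x] by (cases "x \<ge> N") auto
  qed
  thus "bdd_above {a. 0 \<le> a \<and> K a \<le> c}" unfolding S_def .
  have 0: "0 \<in> S" unfolding S_def using K_zero c by simp
  define \<sigma> where "\<sigma> = Sup S"
  have s0: "0 \<le> \<sigma>" unfolding \<sigma>_def using 0 bdd by (rule cSup_upper)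
  have C1: "0 < C + 1" using C_nonneg by simp
  have up: "K (\<sigma> + \<epsilon>) > c" if "\<epsilon> > 0" for \<epsilon>
  proof (rule ccontr)
    assume "\<not> K (\<sigma> + \<epsilon>) > c"
    hence "\<sigma> + \<epsilon> \<in> S" unfolding S_def using s0 that by auto
    hence "\<sigma> + \<epsilon> \<le> \<sigma>" unfolding \<sigma>_def using bdd by (rule cSup_upper)
    thus False using that by simp
  qed
  have le: "K \<sigma> \<le> c"
  proof (rule ccontr)
    assume "\<not> K \<sigma> \<le> c"
    define \<epsilon> where "\<epsilon> = (K \<sigma> - c) / (C + 1)"
    have e0: "0 < \<epsilon>" using \<open>\<not> K \<sigma> \<le> c\<close> C1 \<epsilon>_def by simp
    have "\<sigma> - \<epsilon> < Sup S" using e0 \<sigma>_def by simp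
    then obtain a where aS: "a \<in> S" "\<sigma> - \<epsilon> < a" using less_cSup_iff[of S] 0 bdd by blast
    have "a \<le> \<sigma>" unfolding \<sigma>_def using aS(1) bdd by (rule cSup_upper)
    have a0: "0 \<le> a" "K a \<le> c" using aS S_def by auto
    have "K \<sigma> - K a \<le> C * (\<sigma> - a)" by (rule K_lip) (use a0 \<open>a \<le> \<sigma>\<close> in auto)
    also have "\<dots> \<le> C * \<epsilon>" using aS C_nonneg by (intro mult_left_mono) auto
    also have "\<dots> < (C + 1) * \<epsilon>" using e0 by simp
    also have "\<dots> = K \<sigma> - c" using C1 \<epsilon>_def by simp
    finally show False using a0 by simp
  qed
  have ge: "c \<le> K \<sigma>"
  proof (rule ccontr)
    assume "\<not> c \<le> K \<sigma>"
    define \<epsilon> where "\<epsilon> = (c - K \<sigma>) / (C + 1)"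
    have e0: "0 < \<epsilon>" using \<open>\<not> c \<le> K \<sigma>\<close> C1 \<epsilon>_def by simp
    have "K (\<sigma> + \<epsilon>) - K \<sigma> \<le> C * \<epsilon>" using K_lip[of \<sigma> "\<sigma> + \<epsilon>"] s0 e0 by simp
    also have "\<dots> < (C + 1) * \<epsilon>" using e0 by simp
    also have "\<dots> = c - K \<sigma>" using C1 \<epsilon>_def by simp
    finally show False using up[OF e0] by simp
  qed
  show Kc: "K (lev c) = c" using le ge unfolding lev_def S_def[symmetric] \<sigma>_def[symmetric] by simp
  show "0 < lev c"
  proof -
    have "lev c \<noteq> 0" using Kc K_zero c by auto
    thus ?thesis using s0 unfolding lev_def S_def[symmetric] \<sigma>_def[symmetric] by simp
  qed
  show "Pk (lev c)" unfolding Pk_def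
  proof (intro allI impI)
    fix \<epsilon> :: real assume e0: "0 < \<epsilon>"
    have "K (\<sigma> + \<epsilon>) = K \<sigma> + (LINT s:{\<sigma><..\<sigma>+\<epsilon>}|lborel. k s)" using K_split[of \<sigma> "\<sigma> + \<epsilon>"] s0 e0 by simp
    thus "0 < (LINT s:{lev c<..lev c+\<epsilon>}|lborel. k s)" using up[OF e0] le
      unfolding lev_def S_def[symmetric] \<sigma>_def[symmetric] by simp
  qed
qed

lemma lev_mono:
  assumes "0 < c" "c < c'" "c' < 1"
  shows "lev c < lev c'"
proof -
  have "lev c \<le> lev c'" unfolding lev_def
    by (rule cSup_subset_mono) (use lev_props(4)[of c'] assms K_zero in auto)
  moreover have "lev c \<noteq> lev c'" using lev_props(2)[of c] lev_props(2)[of c'] assms by auto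
  ultimately show ?thesis by simp
qed

lemma close_pair:
  assumes D: "0 < D"
  shows "\<exists>a a'. 0 < a \<and> a < a' \<and> a' - a < D \<and> Pk a \<and> Pk a'"
proof (rule ccontr)
  assume H: "\<not> ?thesis"
  obtain N :: nat where N: "lev (1/2) < real N * D" using reals_Archimedean3[OF D] by blast
  define c where "c j = (real j + 1) / (2 * (real N + 1))" for j :: nat
  have c_pos: "0 < c j" for j unfolding c_def by simp
  have c_lt: "j \<le> N \<Longrightarrow> c j < 1" for j unfolding c_def by (simp add: field_simps)
  have c_mono: "j < j' \<Longrightarrow> c j < c j'" for j j' unfolding c_def by (simp add: divide_strict_right_mono)
  have gapD: "D \<le> lev (c (Suc j)) - lev (c j)" if "j < N" for j
  proof (rule ccontr)
    assume "\<not> D \<le> lev (c (Suc j)) - lev (c j)"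
    moreover have "lev (c j) < lev (c (Suc j))" using lev_mono[of "c j" "c (Suc j)"] c_pos c_mono c_lt that by simp
    ultimately show False using H lev_props(1,3)[of "c j"] lev_props(3)[of "c (Suc j)"] c_pos c_lt that by force
  qed
  have "j \<le> N \<Longrightarrow> real j * D \<le> lev (c j)" for j
  proof (induction j)
    case 0 thus ?case using lev_props(1)[of "c 0"] c_pos c_lt by simp
  next
    case (Suc j)
    thus ?case using gapD[of j] by (simp add: algebra_simps)
  qed
  hence "real N * D \<le> lev (c N)" by simp
  moreover have "c N = 1/2" unfolding c_def by simp
  ultimately show False using N by simp
qed

end

context renew begin

lemma window:
  assumes T0: "0 \<le> T0" and m: "0 < m" "m \<le> c0"
    and glow: "\<And>y. 0 \<le> y \<Longrightarrow> y \<le> Fm + B \<Longrightarrow> min (sqrt \<alpha> * y) c0 \<le> \<alpha> * ricker y"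
    and A: "0 < A" "\<kappa> \<le> K A" and eta: "0 < \<eta>" "1 \<le> sqrt \<alpha> * (\<kappa> - C * \<eta>)"
    and win: "\<And>s. T0 \<le> s \<Longrightarrow> s \<le> T0 + A \<Longrightarrow> m \<le> b s"
  shows "\<forall>t\<ge>T0. m \<le> b t"
proof -
  have key: "m \<le> b t" if ts: "T0 + A \<le> ts" "ts \<le> t" "t \<le> ts + \<eta>" and prev: "\<And>s. T0 \<le> s \<Longrightarrow> s < ts \<Longrightarrow> m \<le> b s" for ts t
  proof -
    have t0: "0 \<le> t" using ts T0 A by simp
    have "m * (K (t - T0) - K (t - ts)) \<le> (LINT a:{t - ts<..t - T0}|lborel. k a * b (t - a))"
      by (rule seg_lower) (use ts T0 A prev in auto)
    also have "\<dots> \<le> cv t" by (rule cv_ge_seg) (use ts T0 A in auto)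
    finally have c1: "m * (K (t - T0) - K (t - ts)) \<le> cv t" .
    have "\<kappa> \<le> K (t - T0)" using A K_mono[of A "t - T0"] ts by simp
    moreover have "K (t - ts) \<le> C * \<eta>"
    proof -
      have "K (t - ts) \<le> C * (t - ts)" using K_le_C[of "t - ts"] ts by simp
      also have "\<dots> \<le> C * \<eta>" using ts C_nonneg by (intro mult_left_mono) auto
      finally show ?thesis .
    qed
    ultimately have "\<kappa> - C * \<eta> \<le> K (t - T0) - K (t - ts)" by simp
    hence "m * (\<kappa> - C * \<eta>) \<le> cv t" using c1 m by (smt (verit) mult_left_mono)
    hence y1: "m * (\<kappa> - C * \<eta>) \<le> xx t" using F_nonneg[OF t0] unfolding xx_def by simp
    have sa: "0 \<le> sqrt \<alpha>" using alpha by simp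
    have "m \<le> sqrt \<alpha> * (m * (\<kappa> - C * \<eta>))" using eta m
      by (metis mult.left_commute mult_cancel_left1 mult_le_cancel_left_pos)
    also have "\<dots> \<le> sqrt \<alpha> * xx t" using y1 sa by (intro mult_left_mono) auto
    finally have "m \<le> min (sqrt \<alpha> * xx t) c0" using m by simp
    also have "\<dots> \<le> \<alpha> * ricker (xx t)" by (rule glow) (use xx_nonneg xx_le t0 in auto)
    finally show ?thesis using b_eq'[OF t0] by simp
  qed
  show ?thesis
  proof (rule ccontr)
    assume "\<not> (\<forall>t\<ge>T0. m \<le> b t)"
    then obtain t where t: "T0 \<le> t" "b t < m" by auto
    define Z where "Z = {s. T0 \<le> s \<and> b s < m}"
    have tZ: "t \<in> Z" using t Z_def by auto
    have bdd: "bdd_below Z" unfolding Z_def by (rule bdd_belowI[of _ T0]) auto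
    define ts where "ts = Inf Z"
    have zA: "T0 + A < z" if "z \<in> Z" for z using that win unfolding Z_def by force
    have tsA: "T0 + A \<le> ts" unfolding ts_def using tZ zA by (intro cInf_greatest) (auto intro: less_imp_le)
    have below: "\<And>s. T0 \<le> s \<Longrightarrow> s < ts \<Longrightarrow> m \<le> b s"
    proof (rule ccontr)
      fix s assume s: "T0 \<le> s" "s < ts" "\<not> m \<le> b s"
      hence "s \<in> Z" by (auto simp: Z_def)
      hence "ts \<le> s" unfolding ts_def using bdd by (rule cInf_lower)
      thus False using s by simp
    qed
    have "ts + \<eta> \<le> Inf Z"
    proof (rule cInf_greatest)
      show "Z \<noteq> {}" using tZ by auto
      fix z assume z: "z \<in> Z"
      have "ts \<le> z" unfolding ts_def using z bdd by (rule cInf_lower)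
      show "ts + \<eta> \<le> z"
      proof (rule ccontr)
        assume "\<not> ts + \<eta> \<le> z"
        hence "m \<le> b z" using key[OF tsA \<open>ts \<le> z\<close> _ below] by simp
        thus False using z Z_def by auto
      qed
    qed
    thus False using eta ts_def by simp
  qed
qed

lemma c0_exists: "\<exists>c0>0. \<forall>y. L / 2 \<le> y \<and> y \<le> Fm + B \<longrightarrow> c0 \<le> \<alpha> * ricker y"
proof (cases "L / 2 \<le> Fm + B")
  case True
  have "continuous_on {L/2..Fm+B} (\<lambda>y. \<alpha> * ricker y)" using ricker_cont by (intro continuous_intros)
  from continuous_attains_inf[OF compact_Icc _ this] True obtain y0 where
    y0: "y0 \<in> {L/2..Fm+B}" "\<And>y. y \<in> {L/2..Fm+B} \<Longrightarrow> \<alpha> * ricker y0 \<le> \<alpha> * ricker y" by auto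
  have "0 < \<alpha> * ricker y0" using y0(1) L_pos alpha ricker_pos[of y0] by simp
  thus ?thesis using y0 by auto
qed (auto intro: exI[of _ 1])

lemma persist:
  assumes t1: "0 < t1" "0 < F t1"
  shows "\<exists>m>0. \<exists>T\<ge>0. \<forall>t\<ge>T. m \<le> b t"
proof -
  have bt1: "0 < b t1" using b_pos_if_xx[of t1] xx_ge_F[of t1] t1 by simp
  from b_cont t1 bt1 obtain d where d: "0 < d" "\<And>s. s \<in> {0..} \<Longrightarrow> dist s t1 < d \<Longrightarrow> dist (b s) (b t1) < b t1"
    unfolding continuous_on_iff by (metis atLeast_iff less_imp_le)
  define r where "r = min d (t1 / 2)"
  have r: "0 < r" "r < t1" using d t1 r_def by auto
  define p where "p = t1 - r"
  define q where "q = t1 + r"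
  have pq: "0 \<le> p" "p < q" using r p_def q_def by auto
  have pos: "0 < b s" if "p < s" "s < q" for s
  proof -
    have "s \<in> {0..}" "dist s t1 < d" using that pq r r_def p_def q_def by (auto simp: dist_real_def)
    hence "dist (b s) (b t1) < b t1" using d by blast
    thus ?thesis by (simp add: dist_real_def)
  qed
  obtain a a' where aa: "0 < a" "a < a'" "a' - a < q - p" "Pk a" "Pk a'"
    using close_pair[of "q - p"] pq by auto
  have growth: "\<And>n t. p + real n * a < t \<Longrightarrow> t < q + real n * a' \<Longrightarrow> 0 < b t"
    using grow[OF pq pos aa] by blast
  obtain c0 where c0: "0 < c0" "\<And>y. L / 2 \<le> y \<Longrightarrow> y \<le> Fm + B \<Longrightarrow> c0 \<le> \<alpha> * ricker y"
    using c0_exists by auto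
  have glow: "min (sqrt \<alpha> * y) c0 \<le> \<alpha> * ricker y" if "0 \<le> y" "y \<le> Fm + B" for y
  proof (cases "y \<le> L / 2")
    case True thus ?thesis using g_lower[OF alpha(1) that(1)] L_def by simp
  next
    case False thus ?thesis using c0(2)[of y] that by simp
  qed
  define sa where "sa = sqrt \<alpha>"
  have sa1: "1 < sa" using alpha sa_def by simp
  define \<kappa> where "\<kappa> = (1 + 1 / sa) / 2"
  have "1 / sa < 1" using sa1 by simp
  hence ka: "1 / sa < \<kappa>" "\<kappa> < 1" unfolding \<kappa>_def by (simp_all add: field_simps)
  obtain N where N: "\<And>s. s \<ge> N \<Longrightarrow> \<kappa> < K s"
    using order_tendstoD(1)[OF K_lim ka(2)] by (auto simp: eventually_at_top_linorder)
  define A where "A = max N 1"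
  have A: "0 < A" "\<kappa> \<le> K A" using N[of A] A_def by auto
  define \<eta> where "\<eta> = (\<kappa> - 1 / sa) / (2 * (C + 1))"
  have C1: "0 < C + 1" using C_nonneg by simp
  have eta0: "0 < \<eta>" using ka C1 \<eta>_def by simp
  have "C * \<eta> \<le> (C + 1) * \<eta>" using eta0 by simp
  also have "\<dots> = (\<kappa> - 1 / sa) / 2" using C1 unfolding \<eta>_def by (simp add: field_simps)
  finally have "C * \<eta> \<le> (\<kappa> - 1 / sa) / 2" .
  moreover have "0 \<le> C * \<eta>" using C_nonneg eta0 by simp
  moreover have "\<And>u w. w \<le> (\<kappa> - u) / 2 \<Longrightarrow> u < \<kappa> \<Longrightarrow> u \<le> \<kappa> - w" by (simp add: field_simps)
  ultimately have "1 / sa \<le> \<kappa> - C * \<eta>" using ka by blast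
  hence "sa * (1 / sa) \<le> sa * (\<kappa> - C * \<eta>)" using sa1 by (intro mult_left_mono) auto
  hence eta1: "1 \<le> sqrt \<alpha> * (\<kappa> - C * \<eta>)" using sa1 sa_def by simp
  obtain n :: nat where n: "A + 2 < real n * (a' - a)" using reals_Archimedean3[of "a' - a"] aa by auto
  define T0 where "T0 = p + real n * a + 1"
  have T00: "0 \<le> T0" using pq aa T0_def by simp
  have winpos: "0 < b s" if "T0 \<le> s" "s \<le> T0 + A" for s
  proof (rule growth[of n])
    show "p + real n * a < s" using that T0_def by simp
    have "T0 + A < q + real n * a'" using n pq T0_def by (simp add: algebra_simps)
    thus "s < q + real n * a'" using that by simp
  qed
  have "continuous_on {T0..T0+A} b" by (rule continuous_on_subset[OF b_cont]) (use T00 in auto)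
  from continuous_attains_inf[OF compact_Icc _ this] A obtain s0 where
    s0: "s0 \<in> {T0..T0+A}" "\<And>s. s \<in> {T0..T0+A} \<Longrightarrow> b s0 \<le> b s" by auto
  define m where "m = min (b s0) c0"
  have m0: "0 < m" using winpos s0 c0 m_def by auto
  have "\<forall>t\<ge>T0. m \<le> b t"
  proof (rule window[OF T00 m0 _ glow A eta0 eta1])
    show "m \<le> c0" using m_def by simp
    fix s assume "T0 \<le> s" "s \<le> T0 + A"
    hence "b s0 \<le> b s" using s0(2) by auto
    thus "m \<le> b s" using m_def by simp
  qed
  thus ?thesis using m0 T00 by blast
qed

end

context renew begin

lemma b_conv:
  assumes t1: "0 < t1" "0 < F t1"
  shows "(b \<longlongrightarrow> L) at_top"
proof -
  obtain m T1 where m: "0 < m" "0 \<le> T1" "\<And>t. t \<ge> T1 \<Longrightarrow> m \<le> b t"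
    using persist[OF t1] by auto
  have bB: "0 \<le> t \<Longrightarrow> \<bar>b t - L\<bar> \<le> B + L" for t
    using b_nonneg[of t] b_le[of t] L_pos unfolding B_def by (simp add: abs_le_iff)
  define Rs where "Rs = {r. 0 \<le> r \<and> (\<exists>T. \<forall>t\<ge>T. \<bar>b t - L\<bar> \<le> r)}"
  have BL: "B + L \<in> Rs" unfolding Rs_def using bB B_pos L_pos by (auto intro!: exI[of _ 0])
  have bdd: "bdd_below Rs" unfolding Rs_def by (rule bdd_belowI[of _ 0]) auto
  define R where "R = Inf Rs"
  have R0: "0 \<le> R" unfolding R_def using BL by (intro cInf_greatest) (auto simp: Rs_def)
  have R_zero: "R = 0"
  proof (rule ccontr)
    assume "R \<noteq> 0"
    hence Rp: "0 < R" using R0 by simp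
    define S where "S = {m/2..L+R+1} \<inter> {y. R/2 \<le> \<bar>y - L\<bar>}"
    have "closed {y::real. R/2 \<le> \<bar>y - L\<bar>}"
      by (rule closed_Collect_le) (auto intro!: continuous_intros)
    hence cS: "compact S" unfolding S_def by (intro compact_Int_closed) auto
    have Sin: "0 < y \<and> y \<noteq> ln \<alpha>" if "y \<in> S" for y
      using that m Rp unfolding S_def L_def[symmetric] by auto
    obtain \<theta> where th: "0 < \<theta>" "\<And>y. y \<in> S \<Longrightarrow> \<bar>\<alpha> * ricker y - L\<bar> \<le> \<bar>y - L\<bar> - \<theta>"
      using rho_compact[OF alpha cS Sin] unfolding L_def by auto
    define \<xi> where "\<xi> = min (\<theta>/4) (1/2)"
    have xi: "0 < \<xi>" "\<xi> \<le> \<theta>/4" "\<xi> \<le> 1/2" using th \<xi>_def by auto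
    have "Inf Rs < R + \<xi>" using xi R_def by simp
    then obtain r where r: "r \<in> Rs" "r < R + \<xi>" using cInf_less_iff[of Rs] BL bdd by blast
    then obtain T2 where T2: "\<And>t. t \<ge> T2 \<Longrightarrow> \<bar>b t - L\<bar> \<le> r" and r0: "0 \<le> r" unfolding Rs_def by auto
    define T where "T = max T2 T1"
    have T: "0 \<le> T" "T1 \<le> T" "T2 \<le> T" using m T_def by auto
    have "\<forall>\<^sub>F t in at_top. dist (F t) 0 < \<xi>/2" using F_lim xi unfolding tendsto_iff by (meson half_gt_zero)
    then obtain NF where NF: "\<And>t. t \<ge> NF \<Longrightarrow> \<bar>F t\<bar> < \<xi>/2" by (auto simp: eventually_at_top_linorder)
    define BL2 where "BL2 = B + 2 * L"
    have BL2: "0 < BL2" using B_pos L_pos BL2_def by simp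
    define \<epsilon>1 where "\<epsilon>1 = min (1/2) (\<xi> / (2 * BL2))"
    have e1: "0 < \<epsilon>1" "\<epsilon>1 \<le> 1/2" "BL2 * \<epsilon>1 \<le> \<xi>/2"
    proof -
      show "0 < \<epsilon>1" using xi BL2 \<epsilon>1_def by simp
      show "\<epsilon>1 \<le> 1/2" using \<epsilon>1_def by simp
      have "BL2 * \<epsilon>1 \<le> BL2 * (\<xi> / (2 * BL2))" using BL2 \<epsilon>1_def by (intro mult_left_mono) auto
      thus "BL2 * \<epsilon>1 \<le> \<xi>/2" using BL2 by simp
    qed
    obtain NK where NK: "\<And>s. s \<ge> NK \<Longrightarrow> 1 - \<epsilon>1 < K s"
      using order_tendstoD(1)[OF K_lim, of "1 - \<epsilon>1"] e1 by (auto simp: eventually_at_top_linorder)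
    define Tb where "Tb = max NF (T + max NK 0)"
    define R' where "R' = max (R/2) (R - \<theta>/2)"
    have R'lt: "R' < R" using Rp th R'_def by simp
    have R'0: "0 \<le> R'" using Rp R'_def by simp
    have main: "\<bar>b t - L\<bar> \<le> R'" if t: "Tb \<le> t" for t
    proof -
      define v where "v = t - T"
      have v: "0 \<le> v" "NK \<le> v" "v \<le> t" using t T Tb_def v_def by auto
      have t0: "0 \<le> t" using v by simp
      have Kv: "1 - \<epsilon>1 < K v" using NK v by simp
      have Kt: "K v \<le> K t" "K t \<le> 1" "K v \<le> 1" using K_mono[of v t] K_le1 v t0 by auto
      define I1 where "I1 = (LINT a:{0<..v}|lborel. k a * b (t - a))"
      define I2 where "I2 = (LINT a:{v<..t}|lborel. k a * b (t - a))"
      have ii: "set_integrable lborel {0<..t} (\<lambda>a. k a * b (t - a))"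
        by (rule cv_int_sub[OF t0]) (auto simp: subset_eq)
      have cvs: "cv t = I1 + I2" unfolding cv_Ioc[OF t0] I1_def I2_def
        by (rule set_integral_split_Ioc[OF ii]) (use v in auto)
      have b1: "\<bar>I1 - L * (K v - K 0)\<bar> \<le> r * (K v - K 0)" unfolding I1_def
        by (rule seg_bound) (use v T T2 v_def in auto)
      have b2: "\<bar>I2 - L * (K t - K v)\<bar> \<le> (B + L) * (K t - K v)" unfolding I2_def
        by (rule seg_bound) (use v bB in auto)
      have l1: "m * (K v - K 0) \<le> I1" unfolding I1_def
        by (rule seg_lower) (use v T m v_def in auto)
      have l2: "0 * (K t - K v) \<le> I2" unfolding I2_def
        by (rule seg_lower) (use v b_nonneg in auto)
      have eq: "xx t - L = F t - L * (1 - K t) + (I1 - L * (K v - K 0)) + (I2 - L * (K t - K v))"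
        unfolding xx_def cvs using K_zero by (simp add: algebra_simps)
      have Q0: "0 \<le> L * (1 - K t)" using L_pos Kt by simp
      have tri: "\<bar>xx t - L\<bar> \<le> \<bar>F t\<bar> + L * (1 - K t) + \<bar>I1 - L * (K v - K 0)\<bar> + \<bar>I2 - L * (K t - K v)\<bar>"
        unfolding eq using Q0 by (smt (verit))
      have "\<bar>xx t - L\<bar> \<le> \<bar>F t\<bar> + L * (1 - K t) + r * K v + (B + L) * (K t - K v)"
        using tri b1 b2 K_zero by simp
      also have "\<dots> \<le> \<xi>/2 + L * \<epsilon>1 + r + (B + L) * \<epsilon>1"
      proof -
        have "\<bar>F t\<bar> \<le> \<xi>/2" using NF[of t] t Tb_def by simp
        moreover have "L * (1 - K t) \<le> L * \<epsilon>1" using L_pos Kt Kv by (intro mult_left_mono) auto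
        moreover have "r * K v \<le> r" using r0 Kt by (simp add: mult_left_le)
        moreover have "(B + L) * (K t - K v) \<le> (B + L) * \<epsilon>1" using B_pos L_pos Kt Kv by (intro mult_left_mono) auto
        ultimately show ?thesis by simp
      qed
      also have "\<dots> = \<xi>/2 + BL2 * \<epsilon>1 + r" unfolding BL2_def by (simp add: algebra_simps)
      also have "\<dots> \<le> r + \<xi>" using e1 by simp
      finally have xl: "\<bar>xx t - L\<bar> \<le> r + \<xi>" .
      have "m / 2 \<le> m * K v"
      proof -
        have "m * (1/2) \<le> m * K v" using m Kv e1 by (intro mult_left_mono) auto
        thus ?thesis by simp
      qed
      hence ylow: "m / 2 \<le> xx t" using l1 l2 K_zero F_nonneg[OF t0] unfolding xx_def cvs by simp
      have ypos: "0 < xx t" using ylow m by simp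
      show ?thesis
      proof (cases "\<bar>xx t - L\<bar> < R/2")
        case True
        hence "\<bar>b t - L\<bar> < R/2" using rho_weak[OF alpha ypos] b_eq'[OF t0] unfolding L_def by simp
        thus ?thesis unfolding R'_def by (simp add: le_max_iff_disj)
      next
        case False
        have "xx t \<in> S" unfolding S_def using False ylow xl r xi by (auto simp: abs_le_iff)
        hence "\<bar>b t - L\<bar> \<le> \<bar>xx t - L\<bar> - \<theta>" using th(2) b_eq'[OF t0] by simp
        also have "\<dots> \<le> R - \<theta>/2" using xl r xi by simp
        finally show ?thesis unfolding R'_def by (simp add: le_max_iff_disj)
      qed
    qed
    have "R' \<in> Rs" unfolding Rs_def using main R'0 by auto
    hence "R \<le> R'" unfolding R_def using bdd by (rule cInf_lower)
    thus False using R'lt by simp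
  qed
  show ?thesis
    unfolding tendsto_iff
  proof (intro allI impI)
    fix e :: real assume e: "0 < e"
    have "Inf Rs < e" using R_zero R_def e by simp
    then obtain r where r: "r \<in> Rs" "r < e" using cInf_less_iff[of Rs] BL bdd by blast
    then obtain T where T: "\<And>t. t \<ge> T \<Longrightarrow> \<bar>b t - L\<bar> \<le> r" unfolding Rs_def by auto
    have "\<And>t. t \<ge> T \<Longrightarrow> dist (b t) L < e" using T r(2) by (force simp: dist_real_def)
    thus "\<forall>\<^sub>F t in at_top. dist (b t) L < e"
      by (auto simp: eventually_at_top_linorder intro!: exI[of _ T])
  qed
qed

end

lemma exp_neg_lim:
  fixes \<mu> :: real assumes "0 < \<mu>" shows "((\<lambda>t. exp (- \<mu> * t)) \<longlongrightarrow> 0) at_top"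
proof -
  have "filterlim (\<lambda>t. \<mu> * t) at_top at_top"
    by (rule filterlim_tendsto_pos_mult_at_top[OF tendsto_const assms filterlim_ident])
  hence "filterlim (\<lambda>t. - (\<mu> * t)) at_bot at_top"
    using filterlim_uminus_at_top by auto
  from filterlim_compose[OF exp_at_bot this] show ?thesis by simp
qed

lemma shift_int:
  fixes f :: "real \<Rightarrow> real"
  shows "(LINT x:{t<..}|lborel. f x) = (LINT s:{0<..}|lborel. f (s + t))"
  unfolding set_lebesgue_integral_def
  by (subst lborel_integral_real_affine[where c=1 and t=t]) (auto simp: indicator_def add.commute)

lemma shift_setint:
  fixes f :: "real \<Rightarrow> real"
  shows "set_integrable lborel {t<..} f \<longleftrightarrow> set_integrable lborel {0<..} (\<lambda>s. f (s + t))"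
proof -
  have "(\<lambda>x. indicator {t<..} (t + 1 * x) *\<^sub>R f (t + 1 * x)) = (\<lambda>s. indicator {0<..} s *\<^sub>R f (s + t))"
    by (auto simp: indicator_def add.commute fun_eq_iff)
  thus ?thesis unfolding set_integrable_def
    using lborel_integrable_real_affine_iff[of 1 "\<lambda>x. indicator {t<..} x *\<^sub>R f x" t] by simp
qed

lemma exp_setint:
  fixes \<mu> :: real assumes mu: "0 < \<mu>"
  shows "set_integrable lborel {0..} (\<lambda>a. exp (- \<mu> * a))" "(LINT a:{0..}|lborel. exp (- \<mu> * a)) = 1 / \<mu>"
proof -
  have hi: "((\<lambda>x::real. exp (-\<mu>*x)) has_integral exp (-\<mu>*0)/\<mu>) {0..}"
    by (rule has_integral_exp_minus_to_infinity[OF mu])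
  hence "(\<lambda>x::real. exp (-\<mu>*x)) integrable_on {0..}" by blast
  hence "(\<lambda>x::real. exp (-\<mu>*x)) absolutely_integrable_on {0..}"
    by (rule nonnegative_absolutely_integrable_1) auto
  hence "integrable lebesgue (\<lambda>x. indicator {0..} x *\<^sub>R exp (-\<mu>*x))"
    unfolding set_integrable_def by simp
  hence "integrable lborel (\<lambda>x. indicator {0..} x *\<^sub>R exp (-\<mu>*x))"
    by (subst (asm) integrable_completion) auto
  thus si: "set_integrable lborel {0..} (\<lambda>a. exp (- \<mu> * a))" unfolding set_integrable_def by simp
  have "(LINT a:{0..}|lborel. exp (- \<mu> * a)) = integral {0..} (\<lambda>a. exp (- \<mu> * a))"
    by (rule set_borel_integral_eq_integral(2)[OF si])
  also have "\<dots> = 1 / \<mu>" using integral_unique[OF hi] by simp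
  finally show "(LINT a:{0..}|lborel. exp (- \<mu> * a)) = 1 / \<mu>" .
qed

lemma exp_int_le:
  fixes \<mu> :: real assumes mu: "0 < \<mu>" and S: "S \<in> sets borel" "S \<subseteq> {0..}"
  shows "set_integrable lborel S (\<lambda>a. exp (- \<mu> * a))" "(LINT a:S|lborel. exp (- \<mu> * a)) \<le> 1 / \<mu>"
proof -
  show si: "set_integrable lborel S (\<lambda>a. exp (- \<mu> * a))"
    by (rule set_integrable_subset[OF exp_setint(1)[OF mu]]) (use S in auto)
  have "(LINT a:S|lborel. exp (- \<mu> * a)) \<le> (LINT a:{0..}|lborel. exp (- \<mu> * a))"
    by (rule set_integral_subset_le[OF exp_setint(1)[OF mu]]) (use S in auto)
  thus "(LINT a:S|lborel. exp (- \<mu> * a)) \<le> 1 / \<mu>" using exp_setint(2)[OF mu] by simp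
qed

lemma conv_tail:
  fixes \<mu> L M :: real and b :: "real \<Rightarrow> real"
  assumes mu: "0 < \<mu>" and bc: "continuous_on {0..} b" and lim: "(b \<longlongrightarrow> L) at_top"
    and bnd: "\<And>t. 0 \<le> t \<Longrightarrow> \<bar>b t - L\<bar> \<le> M"
  shows "((\<lambda>t. LINT a:{0<..t}|lborel. exp (- \<mu> * a) * \<bar>b (t - a) - L\<bar>) \<longlongrightarrow> 0) at_top"
  unfolding tendsto_iff
proof (intro allI impI)
  fix \<epsilon> :: real assume e: "0 < \<epsilon>"
  define \<epsilon>' where "\<epsilon>' = \<epsilon> * \<mu> / 2"
  have e': "0 < \<epsilon>'" using e mu unfolding \<epsilon>'_def by simp
  have "\<forall>\<^sub>F s in at_top. dist (b s) L < \<epsilon>'" using lim e' unfolding tendsto_iff by blast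
  then obtain T0 where T0: "\<And>s. s \<ge> T0 \<Longrightarrow> \<bar>b s - L\<bar> < \<epsilon>'" by (auto simp: eventually_at_top_linorder dist_real_def)
  define T where "T = max T0 0"
  have T: "0 \<le> T" "\<And>s. s \<ge> T \<Longrightarrow> \<bar>b s - L\<bar> < \<epsilon>'" using T0 T_def by auto
  have M0: "0 \<le> M" using bnd[of 0] by simp
  have "((\<lambda>t. ((M + 1) * T * exp (\<mu> * T)) * exp (- \<mu> * t)) \<longlongrightarrow> ((M + 1) * T * exp (\<mu> * T)) * 0) at_top"
    by (intro tendsto_mult tendsto_const exp_neg_lim mu)
  hence "\<forall>\<^sub>F t in at_top. ((M + 1) * T * exp (\<mu> * T)) * exp (- \<mu> * t) < \<epsilon> / 2"
    using e by (intro order_tendstoD(2)) auto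
  then obtain N where N: "\<And>t. t \<ge> N \<Longrightarrow> ((M + 1) * T * exp (\<mu> * T)) * exp (- \<mu> * t) < \<epsilon> / 2"
    by (auto simp: eventually_at_top_linorder)
  have "dist (LINT a:{0<..t}|lborel. exp (- \<mu> * a) * \<bar>b (t - a) - L\<bar>) 0 < \<epsilon>" if t: "t \<ge> max N T" for t
  proof -
    have t0: "0 \<le> t" "T \<le> t" "N \<le> t" "0 \<le> T" using t T by auto
    define f where "f a = exp (- \<mu> * a) * \<bar>b (t - a) - L\<bar>" for a
    have fc: "continuous_on {0..t} f" unfolding f_def
      by (intro continuous_intros continuous_on_compose2[OF bc]) auto
    have fi: "set_integrable lborel {0<..t} f"
      by (rule set_integrable_subset[OF borel_integrable_atLeastAtMost'[OF fc]]) auto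
    have split: "(LINT a:{0<..t}|lborel. f a) = (LINT a:{0<..t-T}|lborel. f a) + (LINT a:{t-T<..t}|lborel. f a)"
      by (rule set_integral_split_Ioc[OF fi]) (use t0 in auto)
    have p1: "(LINT a:{0<..t-T}|lborel. f a) \<le> \<epsilon> / 2"
    proof -
      have "(LINT a:{0<..t-T}|lborel. f a) \<le> (LINT a:{0<..t-T}|lborel. \<epsilon>' * exp (- \<mu> * a))"
      proof (rule set_integral_mono)
        show "set_integrable lborel {0<..t - T} f" by (rule set_integrable_subset[OF fi]) (use t0 in auto)
        show "set_integrable lborel {0<..t - T} (\<lambda>a. \<epsilon>' * exp (- \<mu> * a))"
          using exp_int_le(1)[OF mu, of "{0<..t-T}"] by (auto simp: subset_eq)
        fix a assume a: "a \<in> {0<..t - T}"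
        hence "\<bar>b (t - a) - L\<bar> \<le> \<epsilon>'" using T(2)[of "t - a"] by auto
        thus "f a \<le> \<epsilon>' * exp (- \<mu> * a)" unfolding f_def by (simp add: mult.commute mult_left_mono)
      qed
      also have "\<dots> \<le> \<epsilon>' * (1 / \<mu>)"
      proof -
        have "(LINT a:{0<..t-T}|lborel. exp (- \<mu> * a)) \<le> 1 / \<mu>" using exp_int_le(2)[OF mu, of "{0<..t-T}"] by (simp add: subset_eq)
        hence "\<epsilon>' * (LINT a:{0<..t-T}|lborel. exp (- \<mu> * a)) \<le> \<epsilon>' * (1 / \<mu>)" using e' by (intro mult_left_mono) auto
        thus ?thesis by simp
      qed
      also have "\<dots> = \<epsilon> / 2" using mu \<epsilon>'_def by simp
      finally show ?thesis .
    qed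
    have p2: "(LINT a:{t-T<..t}|lborel. f a) \<le> M * exp (- \<mu> * (t - T)) * T"
    proof -
      have "(LINT a:{t-T<..t}|lborel. f a) \<le> (LINT a:{t-T<..t}|lborel. M * exp (- \<mu> * (t - T)))"
      proof (rule set_integral_mono)
        show "set_integrable lborel {t-T<..t} f" by (rule set_integrable_subset[OF fi]) (use t0 in auto)
        show "set_integrable lborel {t-T<..t} (\<lambda>a. M * exp (- \<mu> * (t - T)))"
          by (rule set_integrable_const_Ioc) (use t0 in auto)
        fix a assume a: "a \<in> {t-T<..t}"
        have "exp (- \<mu> * a) \<le> exp (- \<mu> * (t - T))" using a mu by simp
        moreover have "\<bar>b (t - a) - L\<bar> \<le> M" using bnd[of "t - a"] a by auto
        ultimately show "f a \<le> M * exp (- \<mu> * (t - T))" unfolding f_def using M0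
          by (metis abs_ge_zero exp_ge_zero mult.commute mult_mono)
      qed
      thus ?thesis using t0 by (simp add: set_integral_const_Ioc mult_ac)
    qed
    have "M * exp (- \<mu> * (t - T)) * T \<le> ((M + 1) * T * exp (\<mu> * T)) * exp (- \<mu> * t)"
    proof -
      have "exp (- \<mu> * (t - T)) = exp (\<mu> * T) * exp (- \<mu> * t)" by (simp add: exp_add[symmetric] algebra_simps)
      moreover have "M * T \<le> (M + 1) * T" using T by (simp add: mult_right_mono)
      ultimately show ?thesis by (simp add: mult_right_mono algebra_simps)
    qed
    hence p2': "(LINT a:{t-T<..t}|lborel. f a) < \<epsilon> / 2" using p2 N[OF t0(3)] by simp
    have nn: "0 \<le> (LINT a:{0<..t}|lborel. f a)" by (rule set_integral_nonneg') (simp add: f_def)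
    show ?thesis using split p1 p2' nn unfolding f_def by (simp add: dist_real_def)
  qed
  thus "\<forall>\<^sub>F t in at_top. dist (LINT a:{0<..t}|lborel. exp (- \<mu> * a) * \<bar>b (t - a) - L\<bar>) 0 < \<epsilon>"
    by (auto simp: eventually_at_top_linorder intro!: exI[of _ "max N T"])
qed

lemma age_bound:
  fixes \<mu> L :: real and u0 b :: "real \<Rightarrow> real"
  assumes mu: "0 < \<mu>" and t: "0 \<le> t" and bc: "continuous_on {0..} b"
  shows "L1_dist (age_sol \<mu> u0 b t) (\<lambda>a. L * exp (- \<mu> * a))
    \<le> exp (- \<mu> * t) * L1_dist u0 (\<lambda>a. L * exp (- \<mu> * a))
       + (LINT a:{0<..t}|lborel. exp (- \<mu> * a) * \<bar>b (t - a) - L\<bar>)"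
proof -
  define ub where "ub a = L * exp (- \<mu> * a)" for a
  define G where "G a = \<bar>age_sol \<mu> u0 b t a - ub a\<bar>" for a
  define f where "f a = exp (- \<mu> * a) * \<bar>b (t - a) - L\<bar>" for a
  have fc: "continuous_on {0..t} f" unfolding f_def
    by (intro continuous_intros continuous_on_compose2[OF bc]) auto
  have fi: "set_integrable lborel {0<..t} f"
    by (rule set_integrable_subset[OF borel_integrable_atLeastAtMost'[OF fc]]) auto
  have fnn: "0 \<le> (LINT a:{0<..t}|lborel. f a)" by (rule set_integral_nonneg') (simp add: f_def)
  have Dnn: "0 \<le> L1_dist u0 ub" unfolding L1_dist_def by (rule set_integral_nonneg') simp
  have tail: "(LINT a:{t<..}|lborel. G a) = exp (- \<mu> * t) * L1_dist u0 ub"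
  proof -
    have "(LINT a:{t<..}|lborel. G a) = (LINT s:{0<..}|lborel. G (s + t))" by (rule shift_int)
    also have "\<dots> = (LINT s:{0<..}|lborel. exp (- \<mu> * t) * \<bar>u0 s - ub s\<bar>)"
    proof (rule set_lebesgue_integral_cong)
      show "\<forall>s. s \<in> {0<..} \<longrightarrow> G (s + t) = exp (- \<mu> * t) * \<bar>u0 s - ub s\<bar>"
      proof (intro allI impI)
        fix s :: real assume s: "s \<in> {0<..}"
        have e: "exp (- \<mu> * (s + t)) = exp (- \<mu> * t) * exp (- \<mu> * s)" by (simp add: exp_add[symmetric] algebra_simps)
        have "G (s + t) = \<bar>exp (- \<mu> * t) * u0 s - exp (- \<mu> * t) * (L * exp (- \<mu> * s))\<bar>"
          using s unfolding G_def age_sol_def ub_def e by (simp add: algebra_simps)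
        also have "\<dots> = exp (- \<mu> * t) * \<bar>u0 s - ub s\<bar>"
          unfolding ub_def by (simp add: abs_mult flip: right_diff_distrib)
        finally show "G (s + t) = exp (- \<mu> * t) * \<bar>u0 s - ub s\<bar>" .
      qed
    qed auto
    also have "\<dots> = exp (- \<mu> * t) * L1_dist u0 ub" unfolding L1_dist_def by simp
    finally show ?thesis .
  qed
  show ?thesis
  proof (cases "set_integrable lborel {0<..} G")
    case False
    hence "L1_dist (age_sol \<mu> u0 b t) ub = 0"
      unfolding L1_dist_def set_lebesgue_integral_def set_integrable_def G_def
      by (simp add: not_integrable_integral_eq)
    thus ?thesis using fnn Dnn unfolding ub_def[abs_def] f_def by simp
  next
    case True
    have i1: "set_integrable lborel {0<..t} G" by (rule set_integrable_subset[OF True]) auto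
    have i2: "set_integrable lborel {t<..} G" by (rule set_integrable_subset[OF True]) (use t in auto)
    have "{0<..} = {0<..t} \<union> {t<..}" using t by auto
    hence "L1_dist (age_sol \<mu> u0 b t) ub = (LINT a:{0<..t} \<union> {t<..}|lborel. G a)"
      unfolding L1_dist_def G_def by simp
    also have "\<dots> = (LINT a:{0<..t}|lborel. G a) + (LINT a:{t<..}|lborel. G a)"
      by (rule set_integral_Un) (use i1 i2 in auto)
    also have "(LINT a:{0<..t}|lborel. G a) \<le> (LINT a:{0<..t}|lborel. f a)"
    proof (rule set_integral_mono_AE[OF i1 fi])
      show "AE a\<in>{0<..t} in lborel. G a \<le> f a"
      proof (rule eventually_mono[OF AE_lborel_singleton[of t]], intro impI)
        fix a assume a: "a \<noteq> t" "a \<in> {0<..t}"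
        hence "a < t" by auto
        hence "G a = \<bar>exp (- \<mu> * a) * b (t - a) - exp (- \<mu> * a) * L\<bar>"
          unfolding G_def age_sol_def ub_def by (simp add: mult.commute)
        also have "\<dots> = f a" unfolding f_def by (simp add: abs_mult flip: right_diff_distrib)
        finally show "G a \<le> f a" by simp
      qed
    qed
    finally show ?thesis using tail unfolding ub_def[abs_def] f_def by simp
  qed
qed

locale kset =
  fixes \<mu> \<alpha> C0 :: real and \<beta> :: "real \<Rightarrow> real"
  assumes mu: "0 < \<mu>" and alpha: "1 < \<alpha>" "\<alpha> \<le> exp 2"
    and beta_meas: "\<beta> \<in> borel_measurable lborel"
    and C0: "AE a in lborel. 0 < a \<longrightarrow> 0 \<le> \<beta> a \<and> \<beta> a \<le> C0"
    and beta_norm: "(LINT a:{0<..}|lborel. \<beta> a * exp (- \<mu> * a)) = 1"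
begin

definition "\<beta>c a = (if 0 < a \<and> 0 \<le> \<beta> a \<and> \<beta> a \<le> C0 then \<beta> a else 0)"
definition "kk a = \<beta>c a * exp (- \<mu> * a)"
definition "CC = max C0 0"

lemma beta_meas'[measurable]: "\<beta> \<in> borel_measurable borel"
  using beta_meas by simp

lemma betac_meas[measurable]: "\<beta>c \<in> borel_measurable borel"
  unfolding \<beta>c_def[abs_def] by measurable

lemma kk_meas[measurable]: "kk \<in> borel_measurable borel"
  unfolding kk_def[abs_def] by measurable

lemma betac_nonneg: "0 \<le> \<beta>c a" unfolding \<beta>c_def by auto
lemma betac_le: "\<beta>c a \<le> CC" unfolding \<beta>c_def CC_def by auto
lemma CC_nonneg: "0 \<le> CC" unfolding CC_def by auto
lemma betac_zero: "a \<le> 0 \<Longrightarrow> \<beta>c a = 0" unfolding \<beta>c_def by auto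

lemma kk_nonneg: "0 \<le> kk a" unfolding kk_def using betac_nonneg by simp
lemma kk_zero: "a \<le> 0 \<Longrightarrow> kk a = 0" unfolding kk_def using betac_zero by simp
lemma kk_le: "kk a \<le> CC"
proof (cases "0 < a")
  case True
  hence "exp (- \<mu> * a) \<le> 1" using mu by simp
  hence "\<beta>c a * exp (- \<mu> * a) \<le> \<beta>c a * 1" using betac_nonneg by (intro mult_left_mono) auto
  thus ?thesis unfolding kk_def using betac_le[of a] by simp
next
  case False thus ?thesis using kk_zero CC_nonneg by simp
qed

lemma betac_ae: "AE a in lborel. 0 < a \<longrightarrow> \<beta>c a = \<beta> a"
  using C0 by eventually_elim (auto simp: \<beta>c_def)

lemma betac_ae_shift: "0 \<le> t \<Longrightarrow> AE s in lborel. 0 < s \<longrightarrow> \<beta>c (s + t) = \<beta> (s + t)"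
proof -
  assume t: "0 \<le> t"
  have "AE x in lborel. (\<lambda>a. 0 < a \<longrightarrow> \<beta>c a = \<beta> a) (t + 1 * x)"
    by (rule AE_borel_affine[OF _ _ betac_ae]) auto
  thus ?thesis by eventually_elim (use t in \<open>auto simp: add.commute\<close>)
qed

lemma kk_ae: "AE a in lborel. indicator {0<..} a *\<^sub>R (\<beta> a * exp (- \<mu> * a)) = kk a"
  using betac_ae by eventually_elim (auto simp: kk_def indicator_def betac_zero)

lemma beta_setint: "set_integrable lborel {0<..} (\<lambda>a. \<beta> a * exp (- \<mu> * a))"
proof (rule ccontr)
  assume "\<not> ?thesis"
  hence "(LINT a:{0<..}|lborel. \<beta> a * exp (- \<mu> * a)) = 0"
    unfolding set_integrable_def set_lebesgue_integral_def by (simp add: not_integrable_integral_eq)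
  thus False using beta_norm by simp
qed

lemma kk_int: "integrable lborel kk"
  using beta_setint unfolding set_integrable_def
  by (subst (asm) integrable_cong_AE[OF _ _ kk_ae]) auto

lemma kk_one: "integral\<^sup>L lborel kk = 1"
proof -
  have "integral\<^sup>L lborel kk = (LINT a:{0<..}|lborel. \<beta> a * exp (- \<mu> * a))"
    unfolding set_lebesgue_integral_def by (rule integral_cong_AE[OF _ _ kk_ae[THEN AE_mp, OF AE_I2]]) (auto simp: eq_commute)
  thus ?thesis using beta_norm by simp
qed

end

locale sset = kset +
  fixes u0 b :: "real \<Rightarrow> real"
  assumes u0: "u0 \<in> M0_hat \<mu> \<beta>" and bs: "renewal_sol \<mu> \<alpha> \<beta> u0 b"
begin

definition "u0p s = max 0 (indicator {0<..} s * u0 s)"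
definition "FF t = exp (- \<mu> * t) * (LINT s:{0<..}|lborel. \<beta>c (s + t) * u0p s)"
definition "N0 = (LINT s:{0<..}|lborel. u0p s)"
definition "Fm = CC * N0"

lemma u0_setint: "set_integrable lborel {0<..} u0"
  using u0 unfolding M0_hat_def L1_plus_def by auto

lemma u0_ae: "AE s in lborel. 0 < s \<longrightarrow> 0 \<le> u0 s"
  using u0 unfolding M0_hat_def L1_plus_def by auto

lemma u0_ind_meas[measurable]: "(\<lambda>s. indicator {0<..} s * u0 s) \<in> borel_measurable borel"
proof -
  have "(\<lambda>s. indicator {0<..} s *\<^sub>R u0 s) \<in> borel_measurable lborel"
    using u0_setint unfolding set_integrable_def by (rule borel_measurable_integrable)
  thus ?thesis by simp
qed

lemma u0p_meas[measurable]: "u0p \<in> borel_measurable borel"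
  unfolding u0p_def[abs_def] by measurable

lemma u0p_nonneg: "0 \<le> u0p s" unfolding u0p_def by simp
lemma u0p_zero: "s \<le> 0 \<Longrightarrow> u0p s = 0" unfolding u0p_def by simp

lemma u0p_ae: "AE s in lborel. 0 < s \<longrightarrow> u0p s = u0 s"
  using u0_ae by eventually_elim (auto simp: u0p_def)

lemma u0p_int: "integrable lborel u0p"
proof -
  have "AE s in lborel. indicator {0<..} s *\<^sub>R u0 s = u0p s"
    using u0p_ae by eventually_elim (auto simp: indicator_def u0p_zero)
  thus ?thesis using u0_setint unfolding set_integrable_def
    by (subst (asm) integrable_cong_AE) auto
qed

lemma u0p_setint: "A \<in> sets borel \<Longrightarrow> set_integrable lborel A u0p"
  unfolding set_integrable_def by (rule integrable_mult_indicator) (use u0p_int in auto)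

lemma prod_setint: "set_integrable lborel {0<..} (\<lambda>s. \<beta>c (s + t) * u0p s)"
proof (rule set_integrable_bound[of lborel "{0<..}" "\<lambda>s. CC * u0p s"])
  show "set_integrable lborel {0<..} (\<lambda>s. CC * u0p s)" using u0p_setint by auto
  show "set_borel_measurable lborel {0<..} (\<lambda>s. \<beta>c (s + t) * u0p s)"
    unfolding set_borel_measurable_def by measurable
  show "AE s in lborel. s \<in> {0<..} \<longrightarrow> norm (\<beta>c (s + t) * u0p s) \<le> norm (CC * u0p s)"
    using betac_nonneg betac_le u0p_nonneg CC_nonneg by (auto simp: abs_mult intro!: mult_right_mono)
qed

lemma N0_nonneg: "0 \<le> N0" unfolding N0_def by (rule set_integral_nonneg') (rule u0p_nonneg)

lemma FF_nonneg: "0 \<le> FF t"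
proof -
  have "0 \<le> (LINT s:{0<..}|lborel. \<beta>c (s + t) * u0p s)"
    by (rule set_integral_nonneg') (simp add: betac_nonneg u0p_nonneg)
  thus ?thesis unfolding FF_def by simp
qed

lemma FF_le_exp: "FF t \<le> exp (- \<mu> * t) * Fm"
proof -
  have "(LINT s:{0<..}|lborel. \<beta>c (s + t) * u0p s) \<le> (LINT s:{0<..}|lborel. CC * u0p s)"
    by (rule set_integral_mono[OF prod_setint]) (use u0p_setint betac_le u0p_nonneg in \<open>auto intro: mult_right_mono\<close>)
  thus ?thesis unfolding FF_def Fm_def N0_def by (simp add: mult_left_mono)
qed

lemma Fm_nonneg: "0 \<le> Fm" unfolding Fm_def using CC_nonneg N0_nonneg by simp

lemma FF_le: "0 \<le> t \<Longrightarrow> FF t \<le> Fm"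
proof -
  assume t: "0 \<le> t"
  have "exp (- \<mu> * t) \<le> 1" using t mu by simp
  hence "exp (- \<mu> * t) * Fm \<le> 1 * Fm" using Fm_nonneg by (intro mult_right_mono) auto
  thus ?thesis using FF_le_exp[of t] by simp
qed

lemma FF_lim: "(FF \<longlongrightarrow> 0) at_top"
proof (rule tendsto_sandwich[of "\<lambda>_. 0" _ _ "\<lambda>t. exp (- \<mu> * t) * Fm"])
  show "\<forall>\<^sub>F t in at_top. 0 \<le> FF t" using FF_nonneg by simp
  show "\<forall>\<^sub>F t in at_top. FF t \<le> exp (- \<mu> * t) * Fm" using FF_le_exp by simp
  show "((\<lambda>t. exp (- \<mu> * t) * Fm) \<longlongrightarrow> 0) at_top"
    using tendsto_mult[OF exp_neg_lim[OF mu] tendsto_const[of Fm]] by simp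
qed simp

lemma FF_eq: "0 \<le> t \<Longrightarrow> (LINT a:{t<..}|lborel. \<beta> a * exp (- \<mu> * t) * u0 (a - t)) = FF t"
proof -
  assume t: "0 \<le> t"
  have "(LINT a:{t<..}|lborel. \<beta> a * exp (- \<mu> * t) * u0 (a - t))
      = (LINT s:{0<..}|lborel. \<beta> (s + t) * exp (- \<mu> * t) * u0 (s + t - t))" by (rule shift_int)
  also have "\<dots> = (LINT s:{0<..}|lborel. exp (- \<mu> * t) * (\<beta> (s + t) * u0 s))"
    by (simp add: algebra_simps)
  also have "\<dots> = exp (- \<mu> * t) * (LINT s:{0<..}|lborel. \<beta> (s + t) * u0 s)" by simp
  also have "(LINT s:{0<..}|lborel. \<beta> (s + t) * u0 s) = (LINT s:{0<..}|lborel. \<beta>c (s + t) * u0p s)"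
  proof -
    have m1: "(\<lambda>s. indicator {0<..} s *\<^sub>R (\<beta> (s + t) * u0 s)) \<in> borel_measurable lborel"
    proof -
      have "(\<lambda>s. \<beta> (s + t) * (indicator {0<..} s * u0 s)) \<in> borel_measurable borel" by measurable
      moreover have "(\<lambda>s. \<beta> (s + t) * (indicator {0<..} s * u0 s)) = (\<lambda>s. indicator {0<..} s *\<^sub>R (\<beta> (s + t) * u0 s))"
        by (auto simp: fun_eq_iff indicator_def)
      ultimately show ?thesis by simp
    qed
    have "AE s in lborel. indicator {0<..} s *\<^sub>R (\<beta> (s + t) * u0 s) = indicator {0<..} s *\<^sub>R (\<beta>c (s + t) * u0p s)"
      using betac_ae_shift[OF t] u0p_ae by eventually_elim (auto simp: indicator_def)
    thus ?thesis unfolding set_lebesgue_integral_def by (intro integral_cong_AE m1) auto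
  qed
  finally show ?thesis unfolding FF_def .
qed

lemma b_cont: "continuous_on {0..} b" using bs unfolding renewal_sol_def by auto

lemma conv_eq:
  assumes t: "0 \<le> t"
  shows "(LINT a:{0..t}|lborel. \<beta> a * exp (- \<mu> * a) * b (t - a)) = (LINT a:{0..t}|lborel. kk a * b (t - a))"
proof -
  have bc: "continuous_on {0..t} (\<lambda>a. b (t - a))"
    by (rule continuous_on_compose2[OF b_cont]) (auto intro!: continuous_intros)
  have mb[measurable]: "(\<lambda>a. indicator {0..t} a *\<^sub>R b (t - a)) \<in> borel_measurable borel"
    by (rule borel_measurable_continuous_on_indicator[OF _ bc]) auto
  have e1: "(\<lambda>a. indicator {0..t} a *\<^sub>R (\<beta> a * exp (- \<mu> * a) * b (t - a))) = (\<lambda>a. \<beta> a * exp (- \<mu> * a) * (indicator {0..t} a *\<^sub>R b (t - a)))"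
    by (auto simp: fun_eq_iff indicator_def)
  have e2: "(\<lambda>a. indicator {0..t} a *\<^sub>R (kk a * b (t - a))) = (\<lambda>a. kk a * (indicator {0..t} a *\<^sub>R b (t - a)))"
    by (auto simp: fun_eq_iff indicator_def)
  have m1: "(\<lambda>a. indicator {0..t} a *\<^sub>R (\<beta> a * exp (- \<mu> * a) * b (t - a))) \<in> borel_measurable lborel"
    unfolding e1 by measurable
  have m2: "(\<lambda>a. indicator {0..t} a *\<^sub>R (kk a * b (t - a))) \<in> borel_measurable lborel"
    unfolding e2 by measurable
  have "AE a in lborel. indicator {0..t} a *\<^sub>R (\<beta> a * exp (- \<mu> * a) * b (t - a)) = indicator {0..t} a *\<^sub>R (kk a * b (t - a))"
    using betac_ae AE_lborel_singleton[of 0] by eventually_elim (auto simp: indicator_def kk_def)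
  thus ?thesis unfolding set_lebesgue_integral_def by (rule integral_cong_AE[OF m1 m2])
qed

lemma b_eq: "0 \<le> t \<Longrightarrow> b t = \<alpha> * ricker (FF t + (LINT a:{0..t}|lborel. kk a * b (t - a)))"
  using bs FF_eq conv_eq unfolding renewal_sol_def by auto

lemma is_renew: "renew \<alpha> CC Fm kk FF b"
  by unfold_locales (use alpha kk_nonneg kk_le kk_zero kk_int kk_one FF_nonneg FF_le FF_lim b_cont b_eq in auto)

definition "ub a = ln \<alpha> * exp (- \<mu> * a)"

lemma ub_setint: "set_integrable lborel {0<..} ub"
proof -
  have "set_integrable lborel {0<..} (\<lambda>a. exp (- \<mu> * a))"
    by (rule exp_int_le(1)[OF mu]) auto
  thus ?thesis unfolding ub_def[abs_def] by auto
qed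

lemma ub_meas[measurable]: "ub \<in> borel_measurable borel" unfolding ub_def[abs_def] by measurable

lemma L1_eq: "L1_dist u0 ub = (LINT a:{0<..}|lborel. \<bar>u0p a - ub a\<bar>)"
proof -
  have m1: "(\<lambda>a. indicator {0<..} a *\<^sub>R \<bar>u0 a - ub a\<bar>) \<in> borel_measurable lborel"
  proof -
    have "(\<lambda>a. \<bar>indicator {0<..} a * u0 a - indicator {0<..} a * ub a\<bar>) \<in> borel_measurable borel" by measurable
    moreover have "(\<lambda>a. \<bar>indicator {0<..} a * u0 a - indicator {0<..} a * ub a\<bar>) = (\<lambda>a. indicator {0<..} a *\<^sub>R \<bar>u0 a - ub a\<bar>)"
      by (auto simp: fun_eq_iff indicator_def)
    ultimately show ?thesis by simp
  qed
  have m2: "(\<lambda>a. indicator {0<..} a *\<^sub>R \<bar>u0p a - ub a\<bar>) \<in> borel_measurable lborel" by measurable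
  have "AE a in lborel. indicator {0<..} a *\<^sub>R \<bar>u0 a - ub a\<bar> = indicator {0<..} a *\<^sub>R \<bar>u0p a - ub a\<bar>"
    using u0p_ae by eventually_elim (auto simp: indicator_def)
  thus ?thesis unfolding L1_dist_def set_lebesgue_integral_def by (rule integral_cong_AE[OF m1 m2])
qed

lemma E_bound:
  assumes s: "0 \<le> s"
  shows "\<bar>FF s - ln \<alpha> + ln \<alpha> * renew.K kk s\<bar> \<le> CC * L1_dist u0 ub"
proof -
  interpret R: renew \<alpha> CC Fm kk FF b by (rule is_renew)
  define L where "L = ln \<alpha>"
  have i1: "set_integrable lborel {0<..} (\<lambda>\<sigma>. \<beta>c (\<sigma> + s) * ub \<sigma>)"
  proof (rule set_integrable_bound[of lborel "{0<..}" "\<lambda>\<sigma>. CC * ub \<sigma>"])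
    show "set_integrable lborel {0<..} (\<lambda>\<sigma>. CC * ub \<sigma>)" using ub_setint by auto
    show "set_borel_measurable lborel {0<..} (\<lambda>\<sigma>. \<beta>c (\<sigma> + s) * ub \<sigma>)"
      unfolding set_borel_measurable_def by measurable
    have "0 \<le> ub x" for x unfolding ub_def using alpha by simp
    thus "AE \<sigma> in lborel. \<sigma> \<in> {0<..} \<longrightarrow> norm (\<beta>c (\<sigma> + s) * ub \<sigma>) \<le> norm (CC * ub \<sigma>)"
      using betac_nonneg betac_le CC_nonneg by (auto simp: abs_mult intro!: mult_right_mono)
  qed
  have tail: "L * (LINT a:{s<..}|lborel. kk a) = exp (- \<mu> * s) * (LINT \<sigma>:{0<..}|lborel. \<beta>c (\<sigma> + s) * ub \<sigma>)"
  proof -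
    have "(LINT a:{s<..}|lborel. kk a) = (LINT \<sigma>:{0<..}|lborel. kk (\<sigma> + s))" by (rule shift_int)
    also have "\<dots> = (LINT \<sigma>:{0<..}|lborel. exp (- \<mu> * s) * (\<beta>c (\<sigma> + s) * exp (- \<mu> * \<sigma>)))"
    proof -
      have e: "exp (- \<mu> * (\<sigma> + s)) = exp (- \<mu> * s) * exp (- \<mu> * \<sigma>)" for \<sigma>
      proof -
        have "- \<mu> * (\<sigma> + s) = - \<mu> * s + - \<mu> * \<sigma>" by (simp add: algebra_simps)
        thus ?thesis by (simp only: exp_add)
      qed
      have "(\<lambda>\<sigma>. kk (\<sigma> + s)) = (\<lambda>\<sigma>. exp (- \<mu> * s) * (\<beta>c (\<sigma> + s) * exp (- \<mu> * \<sigma>)))"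
        unfolding kk_def e by (simp add: fun_eq_iff)
      thus ?thesis by simp
    qed
    finally have "L * (LINT a:{s<..}|lborel. kk a) = exp (- \<mu> * s) * (LINT \<sigma>:{0<..}|lborel. L * (\<beta>c (\<sigma> + s) * exp (- \<mu> * \<sigma>)))"
      by simp
    also have "(\<lambda>\<sigma>. L * (\<beta>c (\<sigma> + s) * exp (- \<mu> * \<sigma>))) = (\<lambda>\<sigma>. \<beta>c (\<sigma> + s) * ub \<sigma>)"
      unfolding ub_def L_def by (auto simp: fun_eq_iff)
    finally show ?thesis .
  qed
  have "FF s - L + L * R.K s = FF s - L * (LINT a:{s<..}|lborel. kk a)"
  proof -
    have "L * (R.K s + (LINT a:{s<..}|lborel. kk a)) = L" using R.K_tail[OF s] by simp
    thus ?thesis by (simp add: algebra_simps)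
  qed
  also have "\<dots> = exp (- \<mu> * s) * (LINT \<sigma>:{0<..}|lborel. \<beta>c (\<sigma> + s) * u0p \<sigma> - \<beta>c (\<sigma> + s) * ub \<sigma>)"
  proof -
    have "(LINT \<sigma>:{0<..}|lborel. \<beta>c (\<sigma> + s) * u0p \<sigma> - \<beta>c (\<sigma> + s) * ub \<sigma>)
        = (LINT \<sigma>:{0<..}|lborel. \<beta>c (\<sigma> + s) * u0p \<sigma>) - (LINT \<sigma>:{0<..}|lborel. \<beta>c (\<sigma> + s) * ub \<sigma>)"
      by (rule set_integral_diff(2)[OF prod_setint[of s] i1])
    thus ?thesis unfolding tail FF_def by (simp add: right_diff_distrib)
  qed
  finally have eq: "FF s - L + L * R.K s = exp (- \<mu> * s) * (LINT \<sigma>:{0<..}|lborel. \<beta>c (\<sigma> + s) * u0p \<sigma> - \<beta>c (\<sigma> + s) * ub \<sigma>)" .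
  have id: "set_integrable lborel {0<..} (\<lambda>\<sigma>. \<beta>c (\<sigma> + s) * u0p \<sigma> - \<beta>c (\<sigma> + s) * ub \<sigma>)"
    by (rule set_integral_diff(1)[OF prod_setint[of s] i1])
  have iu: "set_integrable lborel {0<..} (\<lambda>\<sigma>. \<bar>u0p \<sigma> - ub \<sigma>\<bar>)"
    by (rule set_integrable_abs) (use u0p_setint ub_setint in auto)
  have "\<bar>LINT \<sigma>:{0<..}|lborel. \<beta>c (\<sigma> + s) * u0p \<sigma> - \<beta>c (\<sigma> + s) * ub \<sigma>\<bar>
      \<le> (LINT \<sigma>:{0<..}|lborel. \<bar>\<beta>c (\<sigma> + s) * u0p \<sigma> - \<beta>c (\<sigma> + s) * ub \<sigma>\<bar>)"
    using set_integral_norm_bound[OF id] by simp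
  also have "\<dots> \<le> (LINT \<sigma>:{0<..}|lborel. CC * \<bar>u0p \<sigma> - ub \<sigma>\<bar>)"
  proof (rule set_integral_mono)
    show "set_integrable lborel {0<..} (\<lambda>\<sigma>. \<bar>\<beta>c (\<sigma> + s) * u0p \<sigma> - \<beta>c (\<sigma> + s) * ub \<sigma>\<bar>)"
      by (rule set_integrable_abs[OF id])
    show "set_integrable lborel {0<..} (\<lambda>\<sigma>. CC * \<bar>u0p \<sigma> - ub \<sigma>\<bar>)" using iu by auto
    fix \<sigma> :: real
    have "\<bar>\<beta>c (\<sigma> + s) * u0p \<sigma> - \<beta>c (\<sigma> + s) * ub \<sigma>\<bar> = \<beta>c (\<sigma> + s) * \<bar>u0p \<sigma> - ub \<sigma>\<bar>"
      using betac_nonneg by (simp add: abs_mult flip: right_diff_distrib)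
    also have "\<dots> \<le> CC * \<bar>u0p \<sigma> - ub \<sigma>\<bar>" using betac_le by (intro mult_right_mono) auto
    finally show "\<bar>\<beta>c (\<sigma> + s) * u0p \<sigma> - \<beta>c (\<sigma> + s) * ub \<sigma>\<bar> \<le> CC * \<bar>u0p \<sigma> - ub \<sigma>\<bar>" .
  qed
  also have "\<dots> = CC * L1_dist u0 ub" using L1_eq by simp
  finally have bnd: "\<bar>LINT \<sigma>:{0<..}|lborel. \<beta>c (\<sigma> + s) * u0p \<sigma> - \<beta>c (\<sigma> + s) * ub \<sigma>\<bar> \<le> CC * L1_dist u0 ub" .
  have ex: "exp (- \<mu> * s) \<le> 1" using s mu by simp
  have "\<bar>FF s - L + L * R.K s\<bar> = exp (- \<mu> * s) * \<bar>LINT \<sigma>:{0<..}|lborel. \<beta>c (\<sigma> + s) * u0p \<sigma> - \<beta>c (\<sigma> + s) * ub \<sigma>\<bar>"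
    unfolding eq abs_mult by simp
  also have "\<dots> \<le> 1 * (CC * L1_dist u0 ub)"
    by (rule mult_mono[OF ex bnd]) auto
  finally show ?thesis unfolding L_def by simp
qed

end

context sset begin

definition "gg s t = ennreal (indicator {0<..} t * (indicator {0<..} s * (u0p s * kk (t + s))))"

lemma gg_meas: "case_prod gg \<in> borel_measurable (lborel \<Otimes>\<^sub>M lborel)"
  unfolding gg_def[abs_def] case_prod_unfold by measurable

lemma kk_setint: "A \<in> sets borel \<Longrightarrow> set_integrable lborel A kk"
  unfolding set_integrable_def by (rule integrable_mult_indicator) (use kk_int in auto)

lemma Tk_pos:
  assumes s: "0 < s" "ereal s < a_star \<mu> \<beta>"
  shows "0 < (LINT a:{s<..}|lborel. kk a)"
proof -
  obtain a where a: "0 < a" "0 < (LINT \<sigma>:{a<..}|lborel. \<beta> \<sigma> * exp (- \<mu> * \<sigma>))" "s < a"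
    using s(2) unfolding a_star_def less_SUP_iff by auto
  have "(LINT \<sigma>:{a<..}|lborel. \<beta> \<sigma> * exp (- \<mu> * \<sigma>)) = (LINT \<sigma>:{a<..}|lborel. kk \<sigma>)"
  proof (rule set_lebesgue_integral_cong_AE)
    show "AE x\<in>{a<..} in lborel. \<beta> x * exp (- \<mu> * x) = kk x"
      using betac_ae by eventually_elim (use a in \<open>auto simp: kk_def\<close>)
  qed auto
  also have "\<dots> \<le> (LINT \<sigma>:{s<..}|lborel. kk \<sigma>)"
    by (rule set_integral_subset_le[OF kk_setint]) (use a kk_nonneg in auto)
  finally show ?thesis using a by simp
qed

lemma FF_pos: "\<exists>t1>0. 0 < FF t1"
proof (rule ccontr)
  assume H: "\<not> (\<exists>t1>0. 0 < FF t1)"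
  have Z: "(LINT s:{0<..}|lborel. \<beta>c (s + t) * u0p s) = 0" if t: "0 < t" for t
  proof -
    have "FF t \<le> 0" using H t by auto
    hence "exp (- \<mu> * t) * (LINT s:{0<..}|lborel. \<beta>c (s + t) * u0p s) \<le> 0" unfolding FF_def .
    hence "(LINT s:{0<..}|lborel. \<beta>c (s + t) * u0p s) \<le> 0" by (simp add: mult_le_0_iff)
    moreover have "0 \<le> (LINT s:{0<..}|lborel. \<beta>c (s + t) * u0p s)"
      by (rule set_integral_nonneg') (simp add: betac_nonneg u0p_nonneg)
    ultimately show ?thesis by simp
  qed
  have inner0: "(\<integral>\<^sup>+ s. gg s t \<partial>lborel) = 0" for t
  proof (cases "0 < t")
    case False
    thus ?thesis unfolding gg_def by (simp add: indicator_def)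
  next
    case True
    have "(\<integral>\<^sup>+ s. gg s t \<partial>lborel) \<le> (\<integral>\<^sup>+ s. ennreal (indicator {0<..} s *\<^sub>R (\<beta>c (s + t) * u0p s)) \<partial>lborel)"
    proof (rule nn_integral_mono)
      fix s
      have "kk (t + s) \<le> \<beta>c (s + t)"
      proof (cases "0 < t + s")
        case True
        hence "exp (- \<mu> * (t + s)) \<le> 1" using mu by simp
        thus ?thesis unfolding kk_def using betac_nonneg[of "t + s"] by (simp add: add.commute mult_left_le)
      next
        case False thus ?thesis using kk_zero betac_nonneg by (simp add: add.commute)
      qed
      hence "indicator {0<..} t * (indicator {0<..} s * (u0p s * kk (t + s))) \<le> indicator {0<..} s *\<^sub>R (\<beta>c (s + t) * u0p s)"
        using u0p_nonneg[of s] kk_nonneg[of "t + s"] by (auto simp: indicator_def mult.commute mult_left_mono)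
      thus "gg s t \<le> ennreal (indicator {0<..} s *\<^sub>R (\<beta>c (s + t) * u0p s))"
        unfolding gg_def by (rule ennreal_leI)
    qed
    also have "\<dots> = ennreal (LINT s:{0<..}|lborel. \<beta>c (s + t) * u0p s)"
      unfolding set_lebesgue_integral_def
      by (rule nn_integral_eq_integral) (use prod_setint[of t] betac_nonneg u0p_nonneg in \<open>auto simp: set_integrable_def indicator_def\<close>)
    also have "\<dots> = 0" using Z[OF True] by simp
    finally show ?thesis by simp
  qed
  have "(\<integral>\<^sup>+ s. (\<integral>\<^sup>+ t. gg s t \<partial>lborel) \<partial>lborel) = (\<integral>\<^sup>+ t. (\<integral>\<^sup>+ s. gg s t \<partial>lborel) \<partial>lborel)"
    by (rule lborel_pair.Fubini'[symmetric]) (rule gg_meas)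
  also have "\<dots> = 0" using inner0 by simp
  finally have tot: "(\<integral>\<^sup>+ s. (\<integral>\<^sup>+ t. gg s t \<partial>lborel) \<partial>lborel) = 0" .
  have "(\<lambda>s. \<integral>\<^sup>+ t. gg s t \<partial>lborel) \<in> borel_measurable lborel"
    by (rule lborel.borel_measurable_nn_integral) (rule gg_meas)
  hence AE0: "AE s in lborel. (\<integral>\<^sup>+ t. gg s t \<partial>lborel) = 0" using tot by (simp add: nn_integral_0_iff_AE)
  have AEu: "AE s in lborel. (0 < s \<and> ereal s < a_star \<mu> \<beta>) \<longrightarrow> u0p s = 0"
    using AE0
  proof eventually_elim
    case (elim s)
    show ?case
    proof (intro impI, rule ccontr)
      assume s: "0 < s \<and> ereal s < a_star \<mu> \<beta>" and u: "u0p s \<noteq> 0"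
      hence up: "0 < u0p s" using u0p_nonneg[of s] by simp
      have "(\<lambda>t. gg s t) \<in> borel_measurable lborel" unfolding gg_def by measurable
      hence "AE t in lborel. gg s t = 0" using elim by (simp add: nn_integral_0_iff_AE)
      hence "AE t in lborel. indicator {0<..} t *\<^sub>R kk (t + s) = 0"
      proof eventually_elim
        case (elim t)
        have nn: "0 \<le> indicator {0<..} t * (indicator {0<..} s * (u0p s * kk (t + s)))"
          using u0p_nonneg kk_nonneg by simp
        hence "indicator {0<..} t * (indicator {0<..} s * (u0p s * kk (t + s))) = 0"
          using elim unfolding gg_def by simp
        thus ?case using s up by (simp add: indicator_def split: if_splits)
      qed
      hence "(LINT t:{0<..}|lborel. kk (t + s)) = 0"
        unfolding set_lebesgue_integral_def by (rule integral_eq_zero_AE)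
      hence "(LINT a:{s<..}|lborel. kk a) = 0" using shift_int[of s kk] by simp
      moreover have "0 < (LINT a:{s<..}|lborel. kk a)" using s by (intro Tk_pos) auto
      ultimately show False by simp
    qed
  qed
  have "(LINT a:{a. 0 < a \<and> ereal a < a_star \<mu> \<beta>}|lborel. u0 a) = 0"
    unfolding set_lebesgue_integral_def
  proof (rule integral_eq_zero_AE)
    show "AE x in lborel. indicator {a. 0 < a \<and> ereal a < a_star \<mu> \<beta>} x *\<^sub>R u0 x = 0"
      using AEu u0p_ae by eventually_elim (auto simp: indicator_def)
  qed
  thus False using u0 unfolding M0_hat_def by simp
qed

end

theorem theorem6p5:
  fixes \<mu> \<alpha> :: real and \<beta> :: "real \<Rightarrow> real"
  assumes mu_pos: "\<mu> > 0"
    and alpha: "1 < \<alpha>" "\<alpha> \<le> exp 2"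
    and beta_meas: "\<beta> \<in> borel_measurable lborel"
    and beta_Linf: "\<exists>C. AE a in lborel. 0 < a \<longrightarrow> 0 \<le> \<beta> a \<and> \<beta> a \<le> C"
    and beta_norm: "(LINT a:{0<..}|lborel. \<beta> a * exp (- \<mu> * a)) = 1"
  defines "ubar \<equiv> (\<lambda>a. ln \<alpha> * exp (- \<mu> * a))"
  shows
    "(\<forall>\<epsilon>>0. \<exists>\<delta>>0. \<forall>u0 b. u0 \<in> M0_hat \<mu> \<beta> \<and> renewal_sol \<mu> \<alpha> \<beta> u0 b
          \<and> L1_dist u0 ubar < \<delta> \<longrightarrow>
          (\<forall>t\<ge>0. L1_dist (age_sol \<mu> u0 b t) ubar < \<epsilon>))
     \<and> (\<forall>u0 b. u0 \<in> M0_hat \<mu> \<beta> \<and> renewal_sol \<mu> \<alpha> \<beta> u0 b \<longrightarrow>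
          ((\<lambda>t. L1_dist (age_sol \<mu> u0 b t) ubar) \<longlongrightarrow> 0) at_top)"
proof -
  obtain C0 where C0: "AE a in lborel. 0 < a \<longrightarrow> 0 \<le> \<beta> a \<and> \<beta> a \<le> C0" using beta_Linf by auto
  interpret K: kset \<mu> \<alpha> C0 \<beta> by unfold_locales (use mu_pos alpha beta_meas C0 beta_norm in auto)
  define L where "L = ln \<alpha>"
  have Lp: "0 < L" using alpha L_def by simp
  have ubar': "ubar = (\<lambda>a. L * exp (- \<mu> * a))" unfolding ubar_def L_def ..
  have L1nn: "0 \<le> L1_dist f g" for f g unfolding L1_dist_def by (rule set_integral_nonneg') simp
  have part1: "\<forall>\<epsilon>>0. \<exists>\<delta>>0. \<forall>u0 b. u0 \<in> M0_hat \<mu> \<beta> \<and> renewal_sol \<mu> \<alpha> \<beta> u0 b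
          \<and> L1_dist u0 ubar < \<delta> \<longrightarrow> (\<forall>t\<ge>0. L1_dist (age_sol \<mu> u0 b t) ubar < \<epsilon>)"
  proof (intro allI impI)
    fix \<epsilon> :: real assume eps: "0 < \<epsilon>"
    define e where "e = min (\<epsilon> * \<mu> / 4) (L / 3)"
    have e: "0 < e" "2 * e < L" "e \<le> \<epsilon> * \<mu> / 4" using eps mu_pos Lp e_def by auto
    define S where "S = {L - 2 * e .. L - e} \<union> {L + e .. L + 2 * e}"
    have cS: "compact S" unfolding S_def by (intro compact_Un compact_Icc)
    have Sin: "0 < y \<and> y \<noteq> ln \<alpha>" if "y \<in> S" for y using that e unfolding S_def L_def[symmetric] by auto
    obtain \<theta> where th: "0 < \<theta>" "\<And>y. y \<in> S \<Longrightarrow> \<bar>\<alpha> * ricker y - ln \<alpha>\<bar> \<le> \<bar>y - ln \<alpha>\<bar> - \<theta>"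
      using rho_compact[OF alpha cS Sin] by auto
    have th2: "\<forall>y. e \<le> \<bar>y - L\<bar> \<and> \<bar>y - L\<bar> \<le> 2 * e \<longrightarrow> \<bar>\<alpha> * ricker y - L\<bar> \<le> \<bar>y - L\<bar> - \<theta>"
    proof (intro allI impI)
      fix y assume "e \<le> \<bar>y - L\<bar> \<and> \<bar>y - L\<bar> \<le> 2 * e"
      hence "y \<in> S" unfolding S_def by (auto simp: abs_if split: if_splits)
      thus "\<bar>\<alpha> * ricker y - L\<bar> \<le> \<bar>y - L\<bar> - \<theta>" using th(2) L_def by simp
    qed
    define d where "d = min (\<theta> / 2) e"
    have d: "0 < d" "d < \<theta>" "d \<le> e" using th e d_def by auto
    have C1: "0 < K.CC + 1" using K.CC_nonneg by simp
    define \<delta> where "\<delta> = min (\<epsilon> / 2) (d / (K.CC + 1))"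
    have dl: "0 < \<delta>" using eps d C1 \<delta>_def by simp
    show "\<exists>\<delta>>0. \<forall>u0 b. u0 \<in> M0_hat \<mu> \<beta> \<and> renewal_sol \<mu> \<alpha> \<beta> u0 b \<and> L1_dist u0 ubar < \<delta> \<longrightarrow>
              (\<forall>t\<ge>0. L1_dist (age_sol \<mu> u0 b t) ubar < \<epsilon>)"
    proof (intro exI[of _ \<delta>] conjI allI impI dl)
      fix u0 b :: "real \<Rightarrow> real" and t :: real
      assume H: "u0 \<in> M0_hat \<mu> \<beta> \<and> renewal_sol \<mu> \<alpha> \<beta> u0 b \<and> L1_dist u0 ubar < \<delta>" and t: "0 \<le> t"
      interpret S: sset \<mu> \<alpha> C0 \<beta> u0 b by unfold_locales (use H in auto)
      interpret R: renew \<alpha> K.CC S.Fm K.kk S.FF b by (rule S.is_renew)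
      have RL: "R.L = L" unfolding R.L_def L_def ..
      have ub: "S.ub = ubar" unfolding ubar_def S.ub_def[abs_def] ..
      have D: "L1_dist u0 ubar < d / (K.CC + 1)" using H \<delta>_def by simp
      have "K.CC * L1_dist u0 ubar \<le> K.CC * (d / (K.CC + 1))"
        using D K.CC_nonneg by (intro mult_left_mono) auto
      also have "\<dots> \<le> d" using C1 d K.CC_nonneg by (simp add: field_simps)
      finally have CD: "K.CC * L1_dist u0 ubar \<le> d" .
      have Fb: "\<forall>s\<ge>0. \<bar>S.FF s - R.L + R.L * R.K s\<bar> \<le> d"
        using S.E_bound CD ub unfolding RL L_def by (auto intro: order_trans)
      have bb: "\<forall>s\<ge>0. \<bar>b s - R.L\<bar> < e"
        by (rule R.stab[of e \<theta> d]) (use e th(1) th2 d Fb in \<open>simp_all add: RL\<close>)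
      have "L1_dist (age_sol \<mu> u0 b t) ubar
          \<le> exp (- \<mu> * t) * L1_dist u0 ubar + (LINT a:{0<..t}|lborel. exp (- \<mu> * a) * \<bar>b (t - a) - L\<bar>)"
        unfolding ubar' by (rule age_bound[OF mu_pos t S.b_cont])
      also have "exp (- \<mu> * t) * L1_dist u0 ubar < \<epsilon> / 2"
      proof -
        have "exp (- \<mu> * t) \<le> 1" using t mu_pos by simp
        hence "exp (- \<mu> * t) * L1_dist u0 ubar \<le> 1 * L1_dist u0 ubar" using L1nn by (intro mult_right_mono) auto
        thus ?thesis using H \<delta>_def by simp
      qed
      also have "(LINT a:{0<..t}|lborel. exp (- \<mu> * a) * \<bar>b (t - a) - L\<bar>) \<le> \<epsilon> / 4"
      proof -
        have "(LINT a:{0<..t}|lborel. exp (- \<mu> * a) * \<bar>b (t - a) - L\<bar>) \<le> (LINT a:{0<..t}|lborel. e * exp (- \<mu> * a))"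
        proof (rule set_integral_mono)
          have fc: "continuous_on {0..t} (\<lambda>a. exp (- \<mu> * a) * \<bar>b (t - a) - L\<bar>)"
            by (intro continuous_intros continuous_on_compose2[OF S.b_cont]) auto
          show "set_integrable lborel {0<..t} (\<lambda>a. exp (- \<mu> * a) * \<bar>b (t - a) - L\<bar>)"
            by (rule set_integrable_subset[OF borel_integrable_atLeastAtMost'[OF fc]]) auto
          show "set_integrable lborel {0<..t} (\<lambda>a. e * exp (- \<mu> * a))"
            using exp_int_le(1)[OF mu_pos, of "{0<..t}"] by (auto simp: subset_eq)
          fix a assume a: "a \<in> {0<..t}"
          have "\<bar>b (t - a) - L\<bar> \<le> e" using bb a RL by (auto intro: less_imp_le)
          thus "exp (- \<mu> * a) * \<bar>b (t - a) - L\<bar> \<le> e * exp (- \<mu> * a)"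
            by (simp add: mult.commute mult_left_mono)
        qed
        also have "\<dots> = e * (LINT a:{0<..t}|lborel. exp (- \<mu> * a))" by simp
        also have "\<dots> \<le> e * (1 / \<mu>)"
          using exp_int_le(2)[OF mu_pos, of "{0<..t}"] e by (intro mult_left_mono) (auto simp: subset_eq)
        also have "\<dots> \<le> (\<epsilon> * \<mu> / 4) * (1 / \<mu>)" using e mu_pos by (intro mult_right_mono) auto
        also have "\<dots> = \<epsilon> / 4" using mu_pos by simp
        finally show ?thesis .
      qed
      finally show "L1_dist (age_sol \<mu> u0 b t) ubar < \<epsilon>" using eps by simp
    qed
  qed
  have part2: "\<forall>u0 b. u0 \<in> M0_hat \<mu> \<beta> \<and> renewal_sol \<mu> \<alpha> \<beta> u0 b \<longrightarrow>
          ((\<lambda>t. L1_dist (age_sol \<mu> u0 b t) ubar) \<longlongrightarrow> 0) at_top"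
  proof (intro allI impI)
    fix u0 b :: "real \<Rightarrow> real"
    assume H: "u0 \<in> M0_hat \<mu> \<beta> \<and> renewal_sol \<mu> \<alpha> \<beta> u0 b"
    interpret S: sset \<mu> \<alpha> C0 \<beta> u0 b by unfold_locales (use H in auto)
    interpret R: renew \<alpha> K.CC S.Fm K.kk S.FF b by (rule S.is_renew)
    have RL: "R.L = L" unfolding R.L_def L_def ..
    obtain t1 where t1: "0 < t1" "0 < S.FF t1" using S.FF_pos by auto
    have lim: "(b \<longlongrightarrow> L) at_top" using R.b_conv[OF t1] RL by simp
    have bnd: "\<bar>b t - L\<bar> \<le> R.B + L" if "0 \<le> t" for t
      using R.b_nonneg[OF that] R.b_le[OF that] Lp unfolding R.B_def by (simp add: abs_le_iff)
    have tl: "((\<lambda>t. LINT a:{0<..t}|lborel. exp (- \<mu> * a) * \<bar>b (t - a) - L\<bar>) \<longlongrightarrow> 0) at_top"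
      by (rule conv_tail[OF mu_pos S.b_cont lim bnd])
    have ex: "((\<lambda>t. exp (- \<mu> * t) * L1_dist u0 ubar) \<longlongrightarrow> 0) at_top"
      using tendsto_mult[OF exp_neg_lim[OF mu_pos] tendsto_const[of "L1_dist u0 ubar"]] by simp
    show "((\<lambda>t. L1_dist (age_sol \<mu> u0 b t) ubar) \<longlongrightarrow> 0) at_top"
    proof (rule tendsto_sandwich[of "\<lambda>_. 0" _ _ "\<lambda>t. exp (- \<mu> * t) * L1_dist u0 ubar + (LINT a:{0<..t}|lborel. exp (- \<mu> * a) * \<bar>b (t - a) - L\<bar>)"])
      show "\<forall>\<^sub>F t in at_top. 0 \<le> L1_dist (age_sol \<mu> u0 b t) ubar" using L1nn by simp
      have "\<And>t. t \<ge> 0 \<Longrightarrow> L1_dist (age_sol \<mu> u0 b t) ubar \<le> exp (- \<mu> * t) * L1_dist u0 ubar + (LINT a:{0<..t}|lborel. exp (- \<mu> * a) * \<bar>b (t - a) - L\<bar>)"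
        unfolding ubar' by (rule age_bound[OF mu_pos _ S.b_cont])
      thus "\<forall>\<^sub>F t in at_top. L1_dist (age_sol \<mu> u0 b t) ubar \<le> exp (- \<mu> * t) * L1_dist u0 ubar + (LINT a:{0<..t}|lborel. exp (- \<mu> * a) * \<bar>b (t - a) - L\<bar>)"
        by (auto simp: eventually_at_top_linorder intro!: exI[of _ 0])
      show "((\<lambda>t. exp (- \<mu> * t) * L1_dist u0 ubar + (LINT a:{0<..t}|lborel. exp (- \<mu> * a) * \<bar>b (t - a) - L\<bar>)) \<longlongrightarrow> 0) at_top"
        using tendsto_add[OF ex tl] by simp
    qed simp
  qed
  show ?thesis using part1 part2 by blast
qed

end
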